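(* Let $f:\mathbb{R}^n\to\mathbb{R}$ be convex and differentiable with $\|\nabla f(x)-\nabla f(y)\|_2\le L\|x-y\|_2$, attaining its minimum $f_*$ at $x_*$. Run the mirror triangle method with inexact directional derivatives (see context) from $x_0$, let $\frac12P_0^2=\frac12\|x_0-x_*\|_L^2+(1-\frac1n)(f(x_0)-f_* )$, fix $\varepsilon>0$, let $N=\lceil\frac{\sqrt2nP_0}{\sqrt\varepsilon}+1-2n\rceil\ge1$ and $\delta\le\min\{\frac{\varepsilon^{3/4}\sqrt L}{4\sqrt[4]2\sqrt{nP_0}},\frac{\varepsilon^{3/2}\sqrt L}{96\sqrt nP_0^2}\}$. Then with $R_K=\|u_K-x_*\|_L$, $$\frac12\mathbb{E}R_K^2\le P_0^2\quad\text{for all }0\le K\le N.$$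
   Context: $\|x\|_L^2=L\sum_ix_i^2$. For each $k\ge0$, $e_{k+1}$ is a random vector on the Euclidean unit sphere such that, conditionally on previous iterations, $\mathbb{E}[e_{k+1}^ie_{k+1}^j]=0$ for $i\ne j$ and $\mathbb{E}[(e_{k+1}^i)^2]=\frac1n$; $\tilde\delta_{k+1}$ is random with $|\tilde\delta_{k+1}|\le\delta$; $\tilde\nabla f(y)=n(\langle\nabla f(y),e_{k+1}\rangle+\tilde\delta_{k+1})e_{k+1}$. Method: $x_0=u_0=y_0$, $\alpha_0=1-\frac1n$, $A_0=\alpha_0$; for $k\ge0$: $\alpha_{k+1}=\frac{k+2n}{2n^2}$, $A_{k+1}=A_k+\alpha_{k+1}$, $y_{k+1}=\frac{\alpha_{k+1}u_k+A_kx_k}{A_{k+1}}$, $u_{k+1}=\arg\min_{x\in\mathbb{R}^n}\{\frac12\|x-u_k\|_L^2+\alpha_{k+1}\langle\tilde\nabla f(y_{k+1}),x\rangle\}$, $x_{k+1}=y_{k+1}+n\frac{\alpha_{k+1}}{A_{k+1}}(u_{k+1}-u_k)$. *)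

theory Defs
  imports "HOL-Analysis.Analysis" "HOL-Probability.Probability"
begin

fun mtm_alpha :: "nat \<Rightarrow> nat \<Rightarrow> real" where
  "mtm_alpha n 0 = 1 - 1 / real n"
| "mtm_alpha n (Suc k) = (real k + 2 * real n) / (2 * real n ^ 2)"

definition mtm_A :: "nat \<Rightarrow> nat \<Rightarrow> real" where
  "mtm_A n k = (\<Sum>i\<le>k. mtm_alpha n i)"

definition normL_sq :: "real \<Rightarrow> real ^ 'n \<Rightarrow> real" where
  "normL_sq L x = L * (\<Sum>i\<in>UNIV. (x $ i)^2)"

end

theory Submission
  imports Defs
begin


lemma line_deriv:
  fixes f :: "'a::real_inner \<Rightarrow> real"
  assumes grad: "\<And>z. GDERIV f z :> gradf z"
  shows "((\<lambda>t. f (z + t *\<^sub>R h)) has_real_derivative inner h (gradf (z + t *\<^sub>R h))) (at t)"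
proof -
  have d1: "((\<lambda>t. z + t *\<^sub>R h) has_derivative (\<lambda>s. s *\<^sub>R h)) (at t)"
    by (auto intro!: derivative_eq_intros)
  have d2: "(f has_derivative (\<lambda>v. inner v (gradf (z + t *\<^sub>R h)))) (at (z + t *\<^sub>R h))"
    using grad[of "z + t *\<^sub>R h"] unfolding gderiv_def .
  have "((\<lambda>t. f (z + t *\<^sub>R h)) has_derivative (\<lambda>s. inner (s *\<^sub>R h) (gradf (z + t *\<^sub>R h)))) (at t)"
    using has_derivative_compose[OF d1 d2] by (simp add: o_def)
  then show ?thesis unfolding has_field_derivative_def
    by (simp add: mult.commute[of _ "inner h _"])
qed

lemma descent:
  fixes f :: "'a::real_inner \<Rightarrow> real"
  assumes grad: "\<And>z. GDERIV f z :> gradf z"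
    and lip: "\<And>z w. norm (gradf z - gradf w) \<le> L * norm (z - w)"
  shows "f (z + h) \<le> f z + inner (gradf z) h + L / 2 * norm h ^ 2"
proof -
  define \<psi> where "\<psi> t = f (z + t *\<^sub>R h) - t * inner (gradf z) h - L / 2 * t^2 * norm h ^ 2" for t
  define \<psi>' where "\<psi>' t = inner h (gradf (z + t *\<^sub>R h)) - inner (gradf z) h - L * t * norm h ^ 2" for t
  have der: "DERIV \<psi> t :> \<psi>' t" for t
    unfolding \<psi>_def \<psi>'_def
    by (rule derivative_eq_intros line_deriv[OF grad] | simp)+
  obtain \<xi> where \<xi>: "0 < \<xi>" "\<xi> < 1" "\<psi> 1 - \<psi> 0 = (1 - 0) * \<psi>' \<xi>"
    using MVT2[of 0 1 \<psi> \<psi>'] der by auto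
  have "inner h (gradf (z + \<xi> *\<^sub>R h)) - inner (gradf z) h = inner (gradf (z + \<xi> *\<^sub>R h) - gradf z) h"
    by (simp add: inner_diff_left inner_diff_right inner_commute)
  also have "\<dots> \<le> norm (gradf (z + \<xi> *\<^sub>R h) - gradf z) * norm h"
    by (rule norm_cauchy_schwarz)
  also have "\<dots> \<le> (L * norm (\<xi> *\<^sub>R h)) * norm h"
    using lip[of "z + \<xi> *\<^sub>R h" z] by (intro mult_right_mono) auto
  also have "\<dots> = L * \<xi> * norm h ^ 2" using \<xi> by (simp add: power2_eq_square)
  finally have "\<psi>' \<xi> \<le> 0" unfolding \<psi>'_def by simp
  with \<xi> have "\<psi> 1 \<le> \<psi> 0" by simp
  then show ?thesis unfolding \<psi>_def by simp
qed

lemma tangent: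
  fixes f :: "'a::real_inner \<Rightarrow> real"
  assumes grad: "\<And>z. GDERIV f z :> gradf z"
    and convex: "convex_on UNIV f"
  shows "f z + inner (gradf z) (v - z) \<le> f v"
proof -
  define h where "h = v - z"
  define g where "g t = f (z + t *\<^sub>R h)" for t
  have cg: "convex_on UNIV g"
  proof (rule convex_onI)
    fix t a b :: real assume t: "0 < t" "t < 1"
    have "z + ((1 - t) *\<^sub>R a + t *\<^sub>R b) *\<^sub>R h = (1 - t) *\<^sub>R (z + a *\<^sub>R h) + t *\<^sub>R (z + b *\<^sub>R h)"
      by (simp add: algebra_simps)
    then show "g ((1 - t) *\<^sub>R a + t *\<^sub>R b) \<le> (1 - t) * g a + t * g b"
      unfolding g_def using convex_onD[OF convex, of t "z + a *\<^sub>R h" "z + b *\<^sub>R h"] t by simp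
  qed simp
  have "(g has_real_derivative inner h (gradf z)) (at 0 within UNIV)"
    unfolding g_def using line_deriv[OF grad, of z h 0] by simp
  from convex_on_imp_above_tangent[OF cg _ _ _ this] have "g 1 - g 0 \<ge> inner h (gradf z) * (1 - 0)"
    by (metis UNIV_I connected_UNIV interior_UNIV)
  then show ?thesis unfolding g_def h_def by (simp add: inner_commute)
qed

lemma grad_bound:
  fixes f :: "'a::real_inner \<Rightarrow> real"
  assumes desc: "\<And>z h. f (z + h) \<le> f z + inner (gradf z) h + L/2 * norm h ^ 2"
    and Lpos: "L > 0" and minimum: "\<And>z. f xs \<le> f z"
  shows "norm (gradf z) ^ 2 \<le> 2 * L * (f z - f xs)"
proof -
  have "f xs \<le> f (z + (- (1/L)) *\<^sub>R gradf z)" by (rule minimum)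
  also have "\<dots> \<le> f z + inner (gradf z) ((- (1/L)) *\<^sub>R gradf z) + L/2 * norm ((- (1/L)) *\<^sub>R gradf z) ^ 2"
    by (rule desc)
  also have "\<dots> = f z - norm (gradf z) ^ 2 / (2 * L)"
    using Lpos by (simp add: power2_norm_eq_inner[symmetric] power_mult_distrib power2_eq_square field_simps)
  finally show ?thesis using Lpos by (simp add: field_simps)
qed

lemma one_step_real:
  fixes D \<beta> s t \<delta> p :: real
  assumes "D \<ge> 0" "0 \<le> \<beta>" "\<beta> \<le> 1" "\<bar>t\<bar> \<le> \<delta>" "c \<ge> 0"
  shows "- D * (s + t) * s + D * \<beta> / 2 * (s + t)^2 + D / 2 * (s + t)^2 - c * t * p
     \<le> D * (\<bar>s\<bar> * \<delta> + \<delta>^2) + c * \<delta> * \<bar>p\<bar>"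
proof -
  have e1: "- (s + t) * s + \<beta> / 2 * (s + t)^2 + 1 / 2 * (s + t)^2
      = - ((1 - \<beta>)/2) * s^2 + \<beta> * (s * t) + ((1 + \<beta>)/2) * t^2"
    by (simp add: power2_eq_square diff_divide_distrib add_divide_distrib ring_distribs)
  have "s * t \<le> \<bar>s\<bar> * \<delta>"
  proof -
    have "s * t \<le> \<bar>s\<bar> * \<bar>t\<bar>" by (metis abs_ge_self abs_mult)
    also have "\<dots> \<le> \<bar>s\<bar> * \<delta>" using assms(4) by (intro mult_left_mono) auto
    finally show ?thesis .
  qed
  hence a1: "\<beta> * (s * t) \<le> \<beta> * (\<bar>s\<bar> * \<delta>)" using assms by (simp add: mult_left_mono)
  have "\<beta> * (\<bar>s\<bar> * \<delta>) \<le> \<bar>s\<bar> * \<delta>"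
  proof -
    have "0 \<le> \<bar>s\<bar> * \<delta>" using assms(4) by simp
    thus ?thesis using assms(3) mult_right_mono[OF assms(3), of "\<bar>s\<bar> * \<delta>"] by simp
  qed
  have t2: "t^2 \<le> \<delta>^2"
  proof -
    have "\<bar>t\<bar>^2 \<le> \<delta>^2" using assms(4) by (intro power_mono) auto
    thus ?thesis by simp
  qed
  have a2: "((1 + \<beta>)/2) * t^2 \<le> \<delta>^2"
  proof -
    have "((1 + \<beta>)/2) * t^2 \<le> 1 * t^2" using assms by (intro mult_right_mono) auto
    thus ?thesis using t2 by simp
  qed
  have a3: "- ((1 - \<beta>)/2) * s^2 \<le> 0" using assms by simp
  have key: "- (s + t) * s + \<beta> / 2 * (s + t)^2 + 1 / 2 * (s + t)^2 \<le> \<bar>s\<bar> * \<delta> + \<delta>^2"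
    using e1 a1 a2 a3 \<open>\<beta> * (\<bar>s\<bar> * \<delta>) \<le> \<bar>s\<bar> * \<delta>\<close> by linarith
  have k1: "- D * (s + t) * s + D * \<beta> / 2 * (s + t)^2 + D / 2 * (s + t)^2
      = D * (- (s + t) * s + \<beta> / 2 * (s + t)^2 + 1 / 2 * (s + t)^2)"
    by (simp add: algebra_simps)
  have k2: "D * (- (s + t) * s + \<beta> / 2 * (s + t)^2 + 1 / 2 * (s + t)^2) \<le> D * (\<bar>s\<bar> * \<delta> + \<delta>^2)"
    using key assms by (intro mult_left_mono) auto
  have "- t * p \<le> \<delta> * \<bar>p\<bar>"
  proof -
    have "- t * p \<le> \<bar>t\<bar> * \<bar>p\<bar>" by (metis abs_ge_self abs_minus_cancel abs_mult minus_mult_left)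
    also have "\<dots> \<le> \<delta> * \<bar>p\<bar>" using assms(4) by (intro mult_right_mono) auto
    finally show ?thesis .
  qed
  hence "c * (- t * p) \<le> c * (\<delta> * \<bar>p\<bar>)" using assms(5) by (rule mult_left_mono)
  hence k3: "- c * t * p \<le> c * \<delta> * \<bar>p\<bar>" by (simp add: algebra_simps)
  show ?thesis using k1 k2 k3 by linarith
qed

lemma one_step:
  fixes f :: "'a::real_inner \<Rightarrow> real"
  assumes desc: "\<And>z h. f (z + h) \<le> f z + inner (gradf z) h + L/2 * norm h ^ 2"
    and tan: "\<And>z v. f z + inner (gradf z) (v - z) \<le> f v"
    and Lpos: "L > 0" and apos: "a > 0" and Akpos: "Ak \<ge> 0" and AA: "A = Ak + a"
    and nA: "nn^2 * a^2 \<le> A" and tb: "\<bar>t\<bar> \<le> \<delta>" and en: "norm e = 1" and nn: "nn \<ge> 0"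
    and yv: "yv = (1/A) *\<^sub>R (a *\<^sub>R uk + Ak *\<^sub>R xk)"
    and u1: "u1 = uk - (a/L) *\<^sub>R ((nn * (inner (gradf yv) e + t)) *\<^sub>R e)"
    and x1: "x1 = yv + (nn * a / A) *\<^sub>R (u1 - uk)"
  shows "A * (f x1 - f xs) + L/2 * norm (u1 - xs)^2
     \<le> Ak * (f xk - f xs) + L/2 * norm (uk - xs)^2
        + a * inner (gradf yv - (nn * inner (gradf yv) e) *\<^sub>R e) (uk - xs)
        + nn^2 * a^2 / L * (\<bar>inner (gradf yv) e\<bar> * \<delta> + \<delta>^2)
        + a * nn * \<delta> * \<bar>inner e (uk - xs)\<bar>"
proof -
  define s where "s = inner (gradf yv) e"
  define G where "G = gradf yv"
  define w where "w = uk - xs"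
  define c where "c = nn^2 * a^2 / (A * L)"
  define p where "p = inner e w"
  define q where "q = inner G w"
  define r where "r = a / L"
  have Apos: "A > 0" using AA apos Akpos by simp
  have ee: "inner e e = 1" using en by (simp add: power2_norm_eq_inner[symmetric])
  have du: "u1 - uk = (- r * nn * (s + t)) *\<^sub>R e" unfolding u1 s_def r_def by simp
  have h1: "x1 - yv = (- c * (s + t)) *\<^sub>R e"
    unfolding x1 du c_def r_def using Apos Lpos by (simp add: power2_eq_square field_simps)
  have h2: "f x1 \<le> f yv - c * (s + t) * s + L/2 * c^2 * (s + t)^2"
  proof -
    have "f x1 = f (yv + (x1 - yv))" by simp
    also have "\<dots> \<le> f yv + inner G (x1 - yv) + L/2 * norm (x1 - yv)^2" unfolding G_def by (rule desc)
    also have "inner G (x1 - yv) = - c * (s + t) * s" unfolding h1 s_def G_def by simp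
    also have "norm (x1 - yv)^2 = c^2 * (s + t)^2" unfolding h1 using en
      by (simp add: power_mult_distrib)
    finally show ?thesis by simp
  qed
  have Ayv: "A *\<^sub>R yv = a *\<^sub>R uk + Ak *\<^sub>R xk" unfolding yv using Apos by simp
  have h3: "A * f yv \<le> Ak * f xk + a * f xs + a * q"
  proof -
    have t1: "Ak * (f yv + inner G (xk - yv)) \<le> Ak * f xk"
      using tan[of yv xk] Akpos unfolding G_def by (intro mult_left_mono) auto
    have t2: "a * (f yv + inner G (xs - yv)) \<le> a * f xs"
      using tan[of yv xs] apos unfolding G_def by (intro mult_left_mono) auto
    have "Ak *\<^sub>R (xk - yv) + a *\<^sub>R (xs - yv) = Ak *\<^sub>R xk + a *\<^sub>R xs - A *\<^sub>R yv"
      using AA by (simp add: algebra_simps)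
    also have "\<dots> = (- a) *\<^sub>R w" unfolding Ayv w_def by (simp add: algebra_simps)
    finally have comb: "Ak *\<^sub>R (xk - yv) + a *\<^sub>R (xs - yv) = (- a) *\<^sub>R w" .
    have "Ak * inner G (xk - yv) + a * inner G (xs - yv) = inner G (Ak *\<^sub>R (xk - yv) + a *\<^sub>R (xs - yv))"
      by (simp add: inner_add_right)
    also have "\<dots> = - a * q" unfolding comb q_def by simp
    finally have "Ak * inner G (xk - yv) + a * inner G (xs - yv) = - a * q" .
    with t1 t2 AA show ?thesis by (simp add: algebra_simps)
  qed
  have h4: "norm (u1 - xs)^2 = norm w ^ 2 - 2 * r * nn * (s + t) * p + r^2 * nn^2 * (s + t)^2"
  proof -
    have "u1 - xs = w - (r * nn * (s + t)) *\<^sub>R e" unfolding u1 w_def s_def r_def by simp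
    hence "norm (u1 - xs)^2 = inner (w - (r * nn * (s + t)) *\<^sub>R e) (w - (r * nn * (s + t)) *\<^sub>R e)"
      by (simp add: power2_norm_eq_inner)
    also have "\<dots> = norm w ^ 2 - 2 * r * nn * (s + t) * p + r^2 * nn^2 * (s + t)^2"
      unfolding p_def using ee power2_norm_eq_inner[of w, unfolded power2_eq_square]
      by (simp add: add_divide_distrib inner_diff_left inner_diff_right power2_norm_eq_inner inner_commute power2_eq_square algebra_simps)
    finally show ?thesis .
  qed
  define D where "D = nn^2 * a^2 / L"
  define \<beta> where "\<beta> = nn^2 * a^2 / A"
  have AcD: "A * c = D" unfolding c_def D_def using Apos by simp
  have AcD2: "A * (L/2 * c^2) = D * \<beta> / 2" unfolding c_def D_def \<beta>_def using Apos Lpos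
    by (simp add: power2_eq_square field_simps)
  have LD: "L/2 * (r^2 * nn^2) = D / 2" unfolding D_def r_def using Lpos by (simp add: power2_eq_square field_simps)
  have L2: "L/2 * (2 * r * nn) = a * nn" unfolding r_def using Lpos by simp
  have D0: "D \<ge> 0" unfolding D_def using Lpos by simp
  have b0: "0 \<le> \<beta>" "\<beta> \<le> 1" unfolding \<beta>_def using Apos nA by auto
  have R: "- D * (s + t) * s + D * \<beta> / 2 * (s + t)^2 + D / 2 * (s + t)^2 - (a * nn) * t * p
     \<le> D * (\<bar>s\<bar> * \<delta> + \<delta>^2) + (a * nn) * \<delta> * \<bar>p\<bar>"
    by (rule one_step_real[OF D0 b0 tb]) (use apos nn in simp)
  have inn: "inner (G - (nn * s) *\<^sub>R e) w = q - nn * s * p"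
    unfolding q_def p_def by (simp add: inner_diff_left)
  have "A * (f x1 - f xs) + L/2 * norm (u1 - xs)^2
      \<le> A * (f yv - c * (s + t) * s + L/2 * c^2 * (s + t)^2) - A * f xs
         + L/2 * (norm w ^ 2 - 2 * r * nn * (s + t) * p + r^2 * nn^2 * (s + t)^2)"
  proof -
    have "A * f x1 \<le> A * (f yv - c * (s + t) * s + L/2 * c^2 * (s + t)^2)"
      using h2 Apos by (intro mult_left_mono) auto
    thus ?thesis unfolding h4 by (simp add: algebra_simps)
  qed
  also have "\<dots> = A * f yv - (A * c) * (s + t) * s + (A * (L/2 * c^2)) * (s + t)^2 - A * f xs
         + L/2 * norm w ^ 2 - (L/2 * (2 * r * nn)) * (s + t) * p + (L/2 * (r^2 * nn^2)) * (s + t)^2"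
    using Lpos by (simp add: algebra_simps)
  also have "\<dots> = A * f yv - D * (s + t) * s + D * \<beta> / 2 * (s + t)^2 - A * f xs
         + L/2 * norm w ^ 2 - (a * nn) * (s + t) * p + D / 2 * (s + t)^2"
    unfolding AcD AcD2 LD L2 ..
  also have "\<dots> \<le> Ak * f xk + a * f xs + a * q - A * f xs + L/2 * norm w ^ 2 - (a * nn) * s * p
        + (- D * (s + t) * s + D * \<beta> / 2 * (s + t)^2 + D / 2 * (s + t)^2 - (a * nn) * t * p)"
    using h3 by (simp add: algebra_simps)
  also have "\<dots> \<le> Ak * f xk + a * f xs + a * q - A * f xs + L/2 * norm w ^ 2 - (a * nn) * s * p
        + (D * (\<bar>s\<bar> * \<delta> + \<delta>^2) + (a * nn) * \<delta> * \<bar>p\<bar>)"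
    using R by linarith
  also have "\<dots> = Ak * (f xk - f xs) + L/2 * norm w ^ 2 + a * (q - nn * s * p)
        + D * (\<bar>s\<bar> * \<delta> + \<delta>^2) + a * nn * \<delta> * \<bar>p\<bar>"
    using AA by (simp add: algebra_simps)
  finally have fin: "A * (f x1 - f xs) + L/2 * norm (u1 - xs)^2 \<le> Ak * (f xk - f xs) + L/2 * norm w ^ 2 + a * inner (G - (nn * s) *\<^sub>R e) w
        + D * (\<bar>s\<bar> * \<delta> + \<delta>^2) + a * nn * \<delta> * \<bar>p\<bar>" unfolding inn .
  then show ?thesis unfolding D_def w_def p_def G_def s_def .
qed



lemma comp_nth_meas:
  fixes G :: "'w \<Rightarrow> real ^ 'n"
  assumes "G \<in> borel_measurable N"
  shows "(\<lambda>\<omega>. G \<omega> $ i) \<in> borel_measurable N"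
  using measurable_compose[OF assms borel_measurable_nth] by (simp add: o_def)

lemma cov_lemma:
  fixes e G W :: "'w \<Rightarrow> real ^ 'n"
  assumes prob: "prob_space M" and sub: "subalgebra M F"
    and em: "e \<in> borel_measurable M" and Gm: "G \<in> borel_measurable F" and Wm: "W \<in> borel_measurable F"
    and eb: "\<And>\<omega>. \<omega> \<in> space M \<Longrightarrow> norm (e \<omega>) \<le> 1"
    and Gb: "\<And>\<omega>. \<omega> \<in> space M \<Longrightarrow> norm (G \<omega>) \<le> B1"
    and Wb: "\<And>\<omega>. \<omega> \<in> space M \<Longrightarrow> norm (W \<omega>) \<le> B2"
    and cov: "\<And>i j. AE \<omega> in M.
        real_cond_exp M F (\<lambda>\<omega>. e \<omega> $ i * e \<omega> $ j) \<omega> = (if i = j then c else 0)"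
  shows "(\<integral>\<omega>. inner (G \<omega>) (e \<omega>) * inner (e \<omega>) (W \<omega>) \<partial>M) = c * (\<integral>\<omega>. inner (G \<omega>) (W \<omega>) \<partial>M)"
proof -
  interpret prob_space M by (rule prob)
  interpret finite_measure_subalgebra M F
    by unfold_locales (rule sub)
  have GM: "G \<in> borel_measurable M" by (rule measurable_from_subalg[OF sub Gm])
  have WM: "W \<in> borel_measurable M" by (rule measurable_from_subalg[OF sub Wm])
  have cb: "\<bar>x $ i\<bar> \<le> B" if "norm x \<le> B" for x :: "real ^ 'n" and i B
    using component_le_norm_cart[of x i] that by simp
  have B1: "B1 \<ge> 0" and B2: "B2 \<ge> 0"
    using Gb Wb not_empty order_trans[OF norm_ge_zero] by (metis ex_in_conv)+
  have fm: "(\<lambda>\<omega>. G \<omega> $ i * W \<omega> $ j) \<in> borel_measurable F" for i j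
    using comp_nth_meas[OF Gm] comp_nth_meas[OF Wm] by measurable
  have gm: "(\<lambda>\<omega>. e \<omega> $ i * e \<omega> $ j) \<in> borel_measurable M" for i j
    using comp_nth_meas[OF em] by measurable
  have fgm: "(\<lambda>\<omega>. G \<omega> $ i * W \<omega> $ j * (e \<omega> $ i * e \<omega> $ j)) \<in> borel_measurable M" for i j
    using comp_nth_meas[OF em] comp_nth_meas[OF GM] comp_nth_meas[OF WM] by measurable
  have int_fg: "integrable M (\<lambda>\<omega>. G \<omega> $ i * W \<omega> $ j * (e \<omega> $ i * e \<omega> $ j))" for i j
  proof (rule integrable_const_bound[where B="B1 * B2"])
    show "AE \<omega> in M. norm (G \<omega> $ i * W \<omega> $ j * (e \<omega> $ i * e \<omega> $ j)) \<le> B1 * B2"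
    proof (rule AE_I2)
      fix \<omega> assume w: "\<omega> \<in> space M"
      have "\<bar>G \<omega> $ i\<bar> \<le> B1" "\<bar>W \<omega> $ j\<bar> \<le> B2" "\<bar>e \<omega> $ i\<bar> \<le> 1" "\<bar>e \<omega> $ j\<bar> \<le> 1"
        using cb Gb[OF w] Wb[OF w] eb[OF w] by auto
      hence "\<bar>G \<omega> $ i\<bar> * \<bar>W \<omega> $ j\<bar> * (\<bar>e \<omega> $ i\<bar> * \<bar>e \<omega> $ j\<bar>) \<le> B1 * B2 * (1 * 1)"
        by (intro mult_mono) auto
      thus "norm (G \<omega> $ i * W \<omega> $ j * (e \<omega> $ i * e \<omega> $ j)) \<le> B1 * B2" by (simp add: abs_mult)
    qed
  qed (rule fgm)
  have int_f: "integrable M (\<lambda>\<omega>. G \<omega> $ i * W \<omega> $ j)" for i j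
  proof (rule integrable_const_bound[where B="B1 * B2"])
    show "AE \<omega> in M. norm (G \<omega> $ i * W \<omega> $ j) \<le> B1 * B2"
    proof (rule AE_I2)
      fix \<omega> assume w: "\<omega> \<in> space M"
      have "\<bar>G \<omega> $ i\<bar> \<le> B1" "\<bar>W \<omega> $ j\<bar> \<le> B2"
        using cb Gb[OF w] Wb[OF w] by auto
      hence "\<bar>G \<omega> $ i\<bar> * \<bar>W \<omega> $ j\<bar> \<le> B1 * B2" by (intro mult_mono) auto
      thus "norm (G \<omega> $ i * W \<omega> $ j) \<le> B1 * B2" by (simp add: abs_mult)
    qed
  qed (use comp_nth_meas[OF GM] comp_nth_meas[OF WM] in measurable)
  have trm: "(\<integral>\<omega>. G \<omega> $ i * W \<omega> $ j * (e \<omega> $ i * e \<omega> $ j) \<partial>M)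
      = (if i = j then c * (\<integral>\<omega>. G \<omega> $ i * W \<omega> $ j \<partial>M) else 0)" for i j
  proof -
    have "(\<integral>\<omega>. G \<omega> $ i * W \<omega> $ j * (e \<omega> $ i * e \<omega> $ j) \<partial>M)
        = (\<integral>\<omega>. G \<omega> $ i * W \<omega> $ j * real_cond_exp M F (\<lambda>\<omega>. e \<omega> $ i * e \<omega> $ j) \<omega> \<partial>M)"
      using real_cond_exp_intg(2)[OF int_fg fm gm] by simp
    also have "\<dots> = (\<integral>\<omega>. G \<omega> $ i * W \<omega> $ j * (if i = j then c else 0) \<partial>M)"
    proof (rule integral_cong_AE)
      have fM: "(\<lambda>\<omega>. G \<omega> $ i * W \<omega> $ j) \<in> borel_measurable M"
        by (rule measurable_from_subalg[OF sub fm])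
      have cM: "real_cond_exp M F (\<lambda>\<omega>. e \<omega> $ i * e \<omega> $ j) \<in> borel_measurable M"
        by (rule borel_measurable_cond_exp2)
      show "(\<lambda>\<omega>. G \<omega> $ i * W \<omega> $ j * real_cond_exp M F (\<lambda>\<omega>. e \<omega> $ i * e \<omega> $ j) \<omega>) \<in> borel_measurable M"
        using fM cM by measurable
      show "(\<lambda>\<omega>. G \<omega> $ i * W \<omega> $ j * (if i = j then c else 0)) \<in> borel_measurable M"
        using fM by measurable
      show "AE \<omega> in M. G \<omega> $ i * W \<omega> $ j * real_cond_exp M F (\<lambda>\<omega>. e \<omega> $ i * e \<omega> $ j) \<omega> =
          G \<omega> $ i * W \<omega> $ j * (if i = j then c else 0)"
        using cov[of i j] by (rule AE_mp) simp
    qed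
    also have "\<dots> = (if i = j then c * (\<integral>\<omega>. G \<omega> $ i * W \<omega> $ j \<partial>M) else 0)"
      by (simp add: mult.commute)
    finally show ?thesis .
  qed
  have expand: "inner (G \<omega>) (e \<omega>) * inner (e \<omega>) (W \<omega>)
      = (\<Sum>i\<in>UNIV. \<Sum>j\<in>UNIV. G \<omega> $ i * W \<omega> $ j * (e \<omega> $ i * e \<omega> $ j))" for \<omega>
    by (simp add: inner_vec_def sum_product mult_ac)
  have "(\<integral>\<omega>. inner (G \<omega>) (e \<omega>) * inner (e \<omega>) (W \<omega>) \<partial>M)
      = (\<Sum>i\<in>UNIV. \<Sum>j\<in>UNIV. (\<integral>\<omega>. G \<omega> $ i * W \<omega> $ j * (e \<omega> $ i * e \<omega> $ j) \<partial>M))"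
  proof -
    have "(\<integral>\<omega>. (\<Sum>i\<in>UNIV. \<Sum>j\<in>UNIV. G \<omega> $ i * W \<omega> $ j * (e \<omega> $ i * e \<omega> $ j)) \<partial>M)
        = (\<Sum>i\<in>UNIV. (\<integral>\<omega>. (\<Sum>j\<in>UNIV. G \<omega> $ i * W \<omega> $ j * (e \<omega> $ i * e \<omega> $ j)) \<partial>M))"
      by (rule Bochner_Integration.integral_sum[where f="\<lambda>i \<omega>. \<Sum>j\<in>UNIV. G \<omega> $ i * W \<omega> $ j * (e \<omega> $ i * e \<omega> $ j)"]) (rule Bochner_Integration.integrable_sum, rule int_fg)
    also have "\<dots> = (\<Sum>i\<in>UNIV. \<Sum>j\<in>UNIV. (\<integral>\<omega>. G \<omega> $ i * W \<omega> $ j * (e \<omega> $ i * e \<omega> $ j) \<partial>M))"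
      by (intro sum.cong refl Bochner_Integration.integral_sum[where f="\<lambda>j \<omega>. G \<omega> $ i * W \<omega> $ j * (e \<omega> $ i * e \<omega> $ j)" for i] int_fg)
    finally show ?thesis by (simp only: expand)
  qed
  also have "\<dots> = (\<Sum>i\<in>UNIV. c * (\<integral>\<omega>. G \<omega> $ i * W \<omega> $ i \<partial>M))"
    unfolding trm by simp
  also have "\<dots> = c * (\<integral>\<omega>. inner (G \<omega>) (W \<omega>) \<partial>M)"
    by (simp add: inner_vec_def sum_distrib_left Bochner_Integration.integral_sum int_f)
  finally show ?thesis .
qed



lemma normL_eq: "normL_sq L (v :: real ^ 'n) = L * norm v ^ 2"
  unfolding normL_sq_def power2_norm_eq_inner inner_vec_def by (simp add: power2_eq_square)

lemma cont_bdd_integrable: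
  fixes X :: "'w \<Rightarrow> 'b::euclidean_space" and h :: "'b \<Rightarrow> real"
  assumes prob: "prob_space M" and Xm: "X \<in> borel_measurable M"
    and Xb: "\<And>\<omega>. \<omega> \<in> space M \<Longrightarrow> norm (X \<omega>) \<le> B"
    and hc: "continuous_on UNIV h"
  shows "integrable M (\<lambda>\<omega>. h (X \<omega>))"
proof -
  interpret prob_space M by (rule prob)
  have "compact (h ` cball 0 B)"
    by (rule compact_continuous_image[OF continuous_on_subset[OF hc] compact_cball]) simp
  then obtain C where C: "\<And>z. z \<in> h ` cball 0 B \<Longrightarrow> norm z \<le> C"
    using compact_imp_bounded bounded_iff by metis
  show ?thesis
  proof (rule integrable_const_bound[where B=C])
    show "AE \<omega> in M. norm (h (X \<omega>)) \<le> C"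
      using Xb C by (intro AE_I2) (auto simp: dist_norm)
    show "(\<lambda>\<omega>. h (X \<omega>)) \<in> borel_measurable M"
      by (rule borel_measurable_continuous_on[OF hc Xm])
  qed
qed

lemma norm_sub_sq: "norm (h - c *\<^sub>R g)^2 = norm h ^ 2 - 2 * c * inner h g + c^2 * norm (g :: 'a::real_inner) ^ 2"
proof -
  have "norm (h - c *\<^sub>R g)^2 = inner (h - c *\<^sub>R g) (h - c *\<^sub>R g)" by (rule power2_norm_eq_inner)
  also have "\<dots> = inner h h - 2 * c * inner h g + c^2 * inner g g"
    by (simp add: inner_diff_left inner_diff_right inner_commute power2_eq_square algebra_simps)
  finally show ?thesis by (simp add: power2_norm_eq_inner)
qed

lemma argmin_quad:
  fixes u1 uk g z :: "'a::real_inner"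
  assumes Lpos: "L > 0"
    and min: "(1/2) * (L * norm (u1 - uk)^2) + a * inner g u1 \<le> (1/2) * (L * norm (z - uk)^2) + a * inner g z"
    and z: "z = uk - (a / L) *\<^sub>R g"
  shows "u1 = z"
proof -
  have id: "(1/2) * (L * norm (v - uk)^2) + a * inner g v = L/2 * norm (v - z)^2 + (a * inner g z + a^2 / (2*L) * norm g ^ 2)" for v
  proof -
    have "v - uk = (v - z) - (a/L) *\<^sub>R g" unfolding z by simp
    hence "norm (v - uk)^2 = norm (v - z)^2 - 2 * (a/L) * inner (v - z) g + (a/L)^2 * norm g ^ 2"
      by (simp only: norm_sub_sq)
    hence "(1/2) * (L * norm (v - uk)^2) = L/2 * norm (v - z)^2 - a * inner (v - z) g + a^2 / (2*L) * norm g ^ 2"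
      using Lpos by (simp add: power2_eq_square field_simps)
    thus ?thesis by (simp add: inner_diff_left inner_commute algebra_simps)
  qed
  from min have "L/2 * norm (u1 - z)^2 \<le> L/2 * norm (z - z)^2" unfolding id by simp
  hence "norm (u1 - z)^2 \<le> 0" using Lpos by (simp add: mult_le_0_iff)
  thus ?thesis by simp
qed

lemma A_closed: "n \<ge> 1 \<Longrightarrow> 4 * real n^2 * mtm_A n k = 4 * real n^2 - 4 * real n + real k * (real k - 1) + 4 * real n * real k"
proof (induction k)
  case 0 thus ?case by (simp add: mtm_A_def power2_eq_square field_simps)
next
  case (Suc k)
  have "mtm_A n (Suc k) = mtm_A n k + mtm_alpha n (Suc k)" by (simp add: mtm_A_def)
  hence "4 * real n^2 * mtm_A n (Suc k) = 4 * real n^2 * mtm_A n k + 2 * (real k + 2 * real n)"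
    using Suc.prems by (simp add: power2_eq_square field_simps)
  thus ?case using Suc by (simp add: algebra_simps)
qed

lemma A_Suc: "mtm_A n (Suc k) = mtm_A n k + mtm_alpha n (Suc k)" by (simp add: mtm_A_def)

lemma alpha_pos: "n \<ge> 1 \<Longrightarrow> mtm_alpha n (Suc k) > 0" by simp

lemma A_nonneg: "n \<ge> 1 \<Longrightarrow> mtm_A n k \<ge> 0"
  unfolding mtm_A_def
proof (intro sum_nonneg)
  fix i assume "n \<ge> 1" thus "mtm_alpha n i \<ge> 0" by (cases i) auto
qed

lemma nA: assumes "n \<ge> 1" shows "real n^2 * mtm_alpha n (Suc k)^2 \<le> mtm_A n (Suc k)"
proof -
  have n: "real n \<ge> 1" using assms by simp
  have "4 * real n^2 * (real n^2 * mtm_alpha n (Suc k)^2) = (real k + 2 * real n)^2"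
    using n by (simp add: power2_eq_square field_simps)
  also have "\<dots> \<le> 4 * real n^2 * mtm_A n (Suc k)"
    unfolding A_closed[OF assms] using n by (simp add: power2_eq_square algebra_simps)
  finally have "4 * real n^2 * (real n^2 * mtm_alpha n (Suc k)^2) \<le> 4 * real n^2 * mtm_A n (Suc k)" .
  moreover have "4 * real n^2 > 0" using n by simp
  ultimately show ?thesis by (simp only: mult_le_cancel_left_pos)
qed



lemma numeric_core:
  fixes r l q s2 P a \<delta> :: real
  assumes r: "r \<ge> 1" and l: "l > 0" and q: "q > 0" and P: "P > 0" and s2: "s2 > 0" "s2^2 = 2"
    and d0: "\<delta> \<ge> 0" and a0: "a \<ge> 0"
    and qP: "q \<le> s2 * P"
    and dl: "\<delta> \<le> q^3 * l / (96 * r * P^2)"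
    and al: "a \<le> (s2 * P / q) / r^2"
  shows "(r^2 * (s2 * P / q)) * (a * \<delta> * P * (s2 * r / l) * (2 + sqrt a) + r^4 * a^2 * \<delta>^2 / l^2) \<le> P^2 / 2"
proof -
  define Z where "Z = s2 * P / q"
  have Z0: "Z > 0" unfolding Z_def using s2 P q by simp
  have Z1: "Z \<ge> 1" unfolding Z_def using qP q by simp
  have r0: "r > 0" using r by simp
  have s23: "s2^3 = 2 * s2" "s2^4 = 4" using s2 by (simp_all add: power3_eq_cube power4_eq_xxxx power2_eq_square)
  define X where "X = \<delta> * (P * (s2 * r / l))"
  define Xm where "Xm = q^3 * s2 / (96 * P)"
  have X0: "X \<ge> 0" unfolding X_def using d0 P s2 r0 l by simp
  have XXm: "X \<le> Xm"
  proof -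
    have "X \<le> (q^3 * l / (96 * r * P^2)) * (P * (s2 * r / l))"
      unfolding X_def using dl P s2 r0 l by (intro mult_right_mono) auto
    also have "\<dots> = Xm" unfolding Xm_def using P r0 l by (simp add: power2_eq_square field_simps)
    finally show ?thesis .
  qed
  define TA where "TA = r^2 * Z * a"
  have TA0: "TA \<ge> 0" unfolding TA_def using r0 Z0 a0 by simp
  have TAZ: "TA \<le> Z^2"
  proof -
    have "TA \<le> r^2 * Z * (Z / r^2)" unfolding TA_def using al r0 Z0 unfolding Z_def[symmetric]
      by (intro mult_left_mono) auto
    thus ?thesis using r0 by (simp add: power2_eq_square)
  qed
  have sa: "sqrt a \<le> Z / r"
  proof -
    have "sqrt a \<le> sqrt (Z / r^2)" using al unfolding Z_def[symmetric] by simp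
    also have "\<dots> = sqrt Z / r" using r0 by (simp add: real_sqrt_divide)
    also have "sqrt Z \<le> Z" using Z1 by (metis real_sqrt_le_iff real_sqrt_mult_self mult_left_mono
          mult.right_neutral order_trans less_le_not_le Z0 real_sqrt_ge_one real_sqrt_gt_zero real_sqrt_le_mono
          mult_le_cancel_right1 abs_of_pos real_sqrt_abs2 sqrt_le_D)
    hence "sqrt Z / r \<le> Z / r" using r0 by (simp add: divide_right_mono)
    finally show ?thesis .
  qed
  have ra: "r^4 * a \<le> r^2 * Z"
  proof -
    have "r^4 * a \<le> r^4 * (Z / r^2)" using al r0 unfolding Z_def[symmetric] by (intro mult_left_mono) auto
    also have "\<dots> = r^2 * Z" using r0 by (simp add: power2_eq_square power4_eq_xxxx)
    finally show ?thesis .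
  qed
  have dd: "\<delta>^2 / l^2 \<le> q^6 / (9216 * r^2 * P^4)"
  proof -
    have "\<delta>^2 \<le> (q^3 * l / (96 * r * P^2))^2" using dl d0 by (intro power_mono) auto
    hence "\<delta>^2 / l^2 \<le> (q^3 * l / (96 * r * P^2))^2 / l^2" using l by (simp add: divide_right_mono)
    also have "\<dots> = q^6 / (9216 * r^2 * P^4)" using l
      by (simp add: power_divide power_mult_distrib power2_eq_square power4_eq_xxxx field_simps)
    finally show ?thesis .
  qed
  have eq: "(r^2 * (s2 * P / q)) * (a * \<delta> * P * (s2 * r / l) * (2 + sqrt a) + r^4 * a^2 * \<delta>^2 / l^2)
      = 2 * (TA * X) + (TA * X) * sqrt a + TA * ((r^4 * a) * (\<delta>^2 / l^2))"
    unfolding TA_def X_def Z_def by (simp add: power2_eq_square algebra_simps add_divide_distrib)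
  have b1: "TA * X \<le> Z^2 * Xm" using TAZ XXm TA0 X0 by (intro mult_mono) auto
  have b2: "(TA * X) * sqrt a \<le> (Z^2 * Xm) * (Z / r)"
  proof (rule mult_mono[OF b1 sa])
    show "0 \<le> Z^2 * Xm" unfolding Xm_def using q P s2 by simp
    show "0 \<le> sqrt a" using a0 by simp
  qed
  have b3: "TA * ((r^4 * a) * (\<delta>^2 / l^2)) \<le> Z^2 * ((r^2 * Z) * (q^6 / (9216 * r^2 * P^4)))"
  proof (rule mult_mono[OF TAZ mult_mono[OF ra dd]])
    show "0 \<le> r^2 * Z" using Z0 by simp
    show "0 \<le> \<delta>^2 / l^2" by simp
    show "0 \<le> Z^2" by simp
    show "0 \<le> r ^ 4 * a * (\<delta>\<^sup>2 / l\<^sup>2)" using a0 by simp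
  qed
  have c1: "Z^2 * Xm = 2 * s2 * q * P / 96"
    unfolding Z_def Xm_def using q P s2 by (simp add: power2_eq_square power3_eq_cube field_simps)
  have c2: "(Z^2 * Xm) * (Z / r) \<le> 4 * P^2 / 96"
  proof -
    have "(Z^2 * Xm) * (Z / r) \<le> (Z^2 * Xm) * Z"
      using Z0 r q P s2 unfolding Xm_def by (intro mult_left_mono) (auto simp: field_simps)
    also have "\<dots> = s2^4 * P^2 / 96" unfolding Z_def Xm_def using q P
      by (simp add: power2_eq_square power3_eq_cube power4_eq_xxxx field_simps)
    finally show ?thesis using s23 by simp
  qed
  have c3: "Z^2 * ((r^2 * Z) * (q^6 / (9216 * r^2 * P^4))) = 2 * s2 * q^3 / (9216 * P)"
    unfolding Z_def using q P r0 s23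
    by (simp add: power2_eq_square power3_eq_cube power4_eq_xxxx field_simps)
       (simp add: power_def)
  have q3: "q^3 \<le> (s2 * P)^3" using qP q by (intro power_mono) auto
  have c3b: "2 * s2 * q^3 / (9216 * P) \<le> 8 * P^2 / 9216"
  proof -
    have "2 * s2 * q^3 \<le> 2 * s2 * (s2 * P)^3" using q3 s2 by simp
    also have "\<dots> = 8 * P^3" using s23 by (simp add: power_mult_distrib power4_eq_xxxx power3_eq_cube)
    finally have "2 * s2 * q^3 \<le> 8 * P^3" .
    hence "2 * s2 * q^3 / (9216 * P) \<le> 8 * P^3 / (9216 * P)" using P by (intro divide_right_mono) auto
    also have "\<dots> = 8 * P^2 / 9216" using P by (simp add: power2_eq_square power3_eq_cube)
    finally show ?thesis .
  qed
  have c1b: "2 * s2 * q * P / 96 \<le> 4 * P^2 / 96"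
  proof -
    have "s2 * q \<le> s2 * (s2 * P)" using qP s2 by simp
    also have "\<dots> = 2 * P" using s2 by (simp add: power2_eq_square mult.assoc[symmetric])
    finally have "s2 * q \<le> 2 * P" .
    hence "2 * (s2 * q) * P \<le> 2 * (2 * P) * P" using P by (intro mult_right_mono mult_left_mono) auto
    thus ?thesis by (simp add: power2_eq_square mult.assoc)
  qed
  have "2 * (TA * X) + (TA * X) * sqrt a + TA * ((r^4 * a) * (\<delta>^2 / l^2)) \<le> P^2 / 2"
  proof -
    have i1: "TA * X \<le> 4 * P^2 / 96" using b1 c1 c1b by linarith
    have i2: "(TA * X) * sqrt a \<le> 4 * P^2 / 96" using b2 c2 by linarith
    have i3: "TA * ((r^4 * a) * (\<delta>^2 / l^2)) \<le> 8 * P^2 / 9216" using b3 c3 c3b by linarith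
    have "P^2 \<ge> 0" by simp
    then show ?thesis using i1 i2 i3 by linarith
  qed
  then show ?thesis unfolding eq .
qed



theorem lemma15:
  fixes f :: "real ^ 'n \<Rightarrow> real"
    and gradf :: "real ^ 'n \<Rightarrow> real ^ 'n"
    and L \<epsilon> \<delta> :: real
    and xs x0 :: "real ^ 'n"
    and M :: "'w measure"
    and F :: "nat \<Rightarrow> 'w measure"
    and e :: "nat \<Rightarrow> 'w \<Rightarrow> real ^ 'n"
    and dt :: "nat \<Rightarrow> 'w \<Rightarrow> real"
    and x y u :: "nat \<Rightarrow> 'w \<Rightarrow> real ^ 'n"
    and K :: nat
  defines "n \<equiv> CARD('n)"
  defines "P0 \<equiv> sqrt (normL_sq L (x0 - xs) + 2 * (1 - 1 / real n) * (f x0 - f xs))"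
  defines "N \<equiv> \<lceil>sqrt 2 * real n * P0 / sqrt \<epsilon> + 1 - 2 * real n\<rceil>"
  assumes convex: "convex_on UNIV f"
    and grad: "\<And>z. GDERIV f z :> gradf z"
    and Lpos: "L > 0"
    and lipschitz: "\<And>z w. norm (gradf z - gradf w) \<le> L * norm (z - w)"
    and minimum: "\<And>z. f xs \<le> f z"
    and prob: "prob_space M"
    and subalg: "\<And>k. subalgebra M (F k)"
    and filt_mono: "\<And>k. sets (F k) \<subseteq> sets (F (Suc k))"
    and e_meas: "\<And>k. e (Suc k) \<in> borel_measurable (F (Suc k))"
    and dt_meas: "\<And>k. dt (Suc k) \<in> borel_measurable (F (Suc k))"
    and e_sphere: "\<And>k \<omega>. \<omega> \<in> space M \<Longrightarrow> norm (e (Suc k) \<omega>) = 1"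
    and e_cov: "\<And>k i j. AE \<omega> in M.
        real_cond_exp M (F k) (\<lambda>\<omega>. e (Suc k) \<omega> $ i * e (Suc k) \<omega> $ j) \<omega>
          = (if i = j then 1 / real n else 0)"
    and dt_bound: "\<And>k \<omega>. \<omega> \<in> space M \<Longrightarrow> \<bar>dt (Suc k) \<omega>\<bar> \<le> \<delta>"
    and init: "\<And>\<omega>. \<omega> \<in> space M \<Longrightarrow> x 0 \<omega> = x0 \<and> u 0 \<omega> = x0 \<and> y 0 \<omega> = x0"
    and y_step: "\<And>k \<omega>. \<omega> \<in> space M \<Longrightarrow>
        y (Suc k) \<omega> = (1 / mtm_A n (Suc k)) *\<^sub>R
          (mtm_alpha n (Suc k) *\<^sub>R u k \<omega> + mtm_A n k *\<^sub>R x k \<omega>)"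
    and u_step: "\<And>k \<omega> z. \<omega> \<in> space M \<Longrightarrow>
        (1/2) * normL_sq L (u (Suc k) \<omega> - u k \<omega>)
          + mtm_alpha n (Suc k) * inner
              ((real n * (inner (gradf (y (Suc k) \<omega>)) (e (Suc k) \<omega>) + dt (Suc k) \<omega>))
                 *\<^sub>R e (Suc k) \<omega>) (u (Suc k) \<omega>)
        \<le> (1/2) * normL_sq L (z - u k \<omega>)
          + mtm_alpha n (Suc k) * inner
              ((real n * (inner (gradf (y (Suc k) \<omega>)) (e (Suc k) \<omega>) + dt (Suc k) \<omega>))
                 *\<^sub>R e (Suc k) \<omega>) z"
    and x_step: "\<And>k \<omega>. \<omega> \<in> space M \<Longrightarrow>
        x (Suc k) \<omega> = y (Suc k) \<omega>
          + (real n * mtm_alpha n (Suc k) / mtm_A n (Suc k)) *\<^sub>R (u (Suc k) \<omega> - u k \<omega>)"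
    and eps_pos: "\<epsilon> > 0"
    and N_ge: "N \<ge> 1"
    and delta_le: "\<delta> \<le> min (\<epsilon> powr (3/4) * sqrt L / (4 * root 4 2 * sqrt (real n * P0)))
                          (\<epsilon> powr (3/2) * sqrt L / (96 * sqrt (real n) * P0 ^ 2))"
    and K_le: "int K \<le> N"
  shows "(1/2) * (\<integral>\<omega>. normL_sq L (u K \<omega> - xs) \<partial>M) \<le> P0 ^ 2"
proof -
  have n1: "n \<ge> 1" unfolding n_def using zero_less_card_finite[where 'a='n] by linarith
  have nr: "real n \<ge> 1" using n1 by simp
  interpret P: prob_space M by (rule prob)
  have desc: "\<And>z h. f (z + h) \<le> f z + inner (gradf z) h + L/2 * norm h ^ 2"
    by (rule descent[OF grad lipschitz])
  have tan: "\<And>z v. f z + inner (gradf z) (v - z) \<le> f v" by (rule tangent[OF grad convex])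
  have gb: "\<And>z. norm (gradf z) ^ 2 \<le> 2 * L * (f z - f xs)" by (rule grad_bound[OF desc Lpos minimum])
  have g0: "gradf xs = 0" using gb[of xs] by simp
  have fu: "f z - f xs \<le> L/2 * norm (z - xs)^2" for z
    using desc[of xs "z - xs"] g0 by simp
  have contg: "continuous_on UNIV gradf"
    by (rule lipschitz_on_continuous_on[of L], rule lipschitz_onI) (use lipschitz Lpos in \<open>auto simp: dist_norm\<close>)
  have contf: "continuous_on UNIV f"
    using grad unfolding gderiv_def
    by (intro continuous_at_imp_continuous_on ballI has_derivative_continuous) blast
  have gmeas: "gradf \<in> borel_measurable borel" by (rule borel_measurable_continuous_onI[OF contg])
  have fmeas: "f \<in> borel_measurable borel" by (rule borel_measurable_continuous_onI[OF contf])
  define a where "a k = mtm_alpha n (Suc k)" for k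
  define Ak where "Ak k = mtm_A n k" for k
  have apos: "a k > 0" for k unfolding a_def using n1 by simp
  have Akn: "Ak k \<ge> 0" for k unfolding Ak_def by (rule A_nonneg[OF n1])
  have AS: "Ak (Suc k) = Ak k + a k" for k unfolding Ak_def a_def by (rule A_Suc)
  have ASpos: "Ak (Suc k) > 0" for k using AS apos Akn by (metis add_nonneg_pos)
  have nAk: "real n ^ 2 * a k ^ 2 \<le> Ak (Suc k)" for k unfolding Ak_def a_def by (rule nA[OF n1])
  have sub: "subalgebra M (F k)" for k by (rule subalg)
  have spF: "space (F k) = space M" for k using sub unfolding subalgebra_def by simp
  have subkj: "k \<le> j \<Longrightarrow> subalgebra (F j) (F k)" for k j
  proof (induction j)
    case 0 thus ?case using sub unfolding subalgebra_def by auto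
  next
    case (Suc j)
    show ?case
    proof (cases "k = Suc j")
      case True thus ?thesis using sub unfolding subalgebra_def by auto
    next
      case False
      hence "subalgebra (F j) (F k)" using Suc by simp
      thus ?thesis using filt_mono[of j] spF unfolding subalgebra_def by auto
    qed
  qed
  have liftM: "X \<in> borel_measurable (F k) \<Longrightarrow> X \<in> borel_measurable M" for X :: "'w \<Rightarrow> 'b::topological_space" and k
    by (rule measurable_from_subalg[OF sub])
  have lift: "X \<in> borel_measurable (F k) \<Longrightarrow> X \<in> borel_measurable (F (Suc k))" for X :: "'w \<Rightarrow> 'b::topological_space" and k
    by (rule measurable_from_subalg[OF subkj[of k "Suc k"]]) simp_all
  define g where "g k \<omega> = (real n * (inner (gradf (y (Suc k) \<omega>)) (e (Suc k) \<omega>) + dt (Suc k) \<omega>)) *\<^sub>R e (Suc k) \<omega>" for k \<omega>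
  have u_form: "u (Suc k) \<omega> = u k \<omega> - (a k / L) *\<^sub>R g k \<omega>" if w: "\<omega> \<in> space M" for k \<omega>
  proof (rule argmin_quad[OF Lpos])
    show "(1/2) * (L * norm (u (Suc k) \<omega> - u k \<omega>)^2) + a k * inner (g k \<omega>) (u (Suc k) \<omega>)
       \<le> (1/2) * (L * norm ((u k \<omega> - (a k / L) *\<^sub>R g k \<omega>) - u k \<omega>)^2) + a k * inner (g k \<omega>) (u k \<omega> - (a k / L) *\<^sub>R g k \<omega>)"
      using u_step[OF w, of k "u k \<omega> - (a k / L) *\<^sub>R g k \<omega>"] unfolding normL_eq g_def a_def .
  qed simp
  have y_form: "y (Suc k) \<omega> = (1 / Ak (Suc k)) *\<^sub>R (a k *\<^sub>R u k \<omega> + Ak k *\<^sub>R x k \<omega>)" if "\<omega> \<in> space M" for k \<omega>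
    using y_step[OF that] unfolding a_def Ak_def .
  have x_form: "x (Suc k) \<omega> = y (Suc k) \<omega> + (real n * a k / Ak (Suc k)) *\<^sub>R (u (Suc k) \<omega> - u k \<omega>)" if "\<omega> \<in> space M" for k \<omega>
    using x_step[OF that] unfolding a_def Ak_def .
  have sp_ne: "space M \<noteq> {}" by (rule P.not_empty)
  have d0: "\<delta> \<ge> 0" using dt_bound[of _ 0] sp_ne by (meson abs_ge_zero ex_in_conv order_trans)
  have gradb: "norm (gradf z) \<le> norm (gradf 0) + L * norm z" for z
    using lipschitz[of z 0] norm_triangle_ineq2[of "gradf z" "gradf 0"] by simp
  have inv: "u k \<in> borel_measurable (F k) \<and> x k \<in> borel_measurable (F k) \<and>
      (\<exists>B. \<forall>\<omega>\<in>space M. norm (u k \<omega>) \<le> B \<and> norm (x k \<omega>) \<le> B)" for k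
  proof (induction k)
    case 0
    have "u 0 \<in> borel_measurable (F 0) \<longleftrightarrow> (\<lambda>_. x0) \<in> borel_measurable (F 0)"
      by (rule measurable_cong) (use init spF in auto)
    moreover have "x 0 \<in> borel_measurable (F 0) \<longleftrightarrow> (\<lambda>_. x0) \<in> borel_measurable (F 0)"
      by (rule measurable_cong) (use init spF in auto)
    ultimately show ?case using init by auto
  next
    case (Suc k)
    then obtain B where um: "u k \<in> borel_measurable (F k)" and xm: "x k \<in> borel_measurable (F k)"
      and B: "\<And>\<omega>. \<omega> \<in> space M \<Longrightarrow> norm (u k \<omega>) \<le> B \<and> norm (x k \<omega>) \<le> B" by blast
    have B0: "B \<ge> 0" using B sp_ne by (metis all_not_in_conv norm_ge_zero order_trans)
    have ym: "y (Suc k) \<in> borel_measurable (F k)"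
    proof -
      have "(\<lambda>\<omega>. (1 / Ak (Suc k)) *\<^sub>R (a k *\<^sub>R u k \<omega> + Ak k *\<^sub>R x k \<omega>)) \<in> borel_measurable (F k)"
        using um xm by measurable
      moreover have "y (Suc k) \<in> borel_measurable (F k) \<longleftrightarrow> (\<lambda>\<omega>. (1 / Ak (Suc k)) *\<^sub>R (a k *\<^sub>R u k \<omega> + Ak k *\<^sub>R x k \<omega>)) \<in> borel_measurable (F k)"
        by (rule measurable_cong) (use y_form spF in auto)
      ultimately show ?thesis by simp
    qed
    have yb: "norm (y (Suc k) \<omega>) \<le> B" if w: "\<omega> \<in> space M" for \<omega>
    proof -
      have "norm (y (Suc k) \<omega>) \<le> (1 / Ak (Suc k)) * (a k * norm (u k \<omega>) + Ak k * norm (x k \<omega>))"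
        unfolding y_form[OF w] using ASpos[of k] apos[of k] Akn[of k]
        by (simp add: norm_triangle_le divide_right_mono)
      also have "\<dots> \<le> (1 / Ak (Suc k)) * (a k * B + Ak k * B)"
        using B[OF w] ASpos[of k] apos[of k] Akn[of k]
        by (intro mult_left_mono add_mono mult_left_mono) auto
      also have "\<dots> = B" using AS[of k] ASpos[of k] by (simp add: field_simps)
      finally show ?thesis .
    qed
    define Gb where "Gb = norm (gradf 0) + L * B"
    have gm: "g k \<in> borel_measurable (F (Suc k))"
      unfolding g_def using lift[OF ym] e_meas[of k] dt_meas[of k] gmeas by measurable
    have gbd: "norm (g k \<omega>) \<le> real n * (Gb + \<delta>)" if w: "\<omega> \<in> space M" for \<omega>
    proof -
      have en: "norm (e (Suc k) \<omega>) = 1" by (rule e_sphere[OF w])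
      have "\<bar>inner (gradf (y (Suc k) \<omega>)) (e (Suc k) \<omega>)\<bar> \<le> norm (gradf (y (Suc k) \<omega>))"
        using Cauchy_Schwarz_ineq2[of "gradf (y (Suc k) \<omega>)" "e (Suc k) \<omega>"] en by simp
      also have "\<dots> \<le> Gb" unfolding Gb_def using gradb[of "y (Suc k) \<omega>"] yb[OF w] Lpos
        by (meson add_left_mono mult_left_mono less_imp_le order_trans)
      finally have s1: "\<bar>inner (gradf (y (Suc k) \<omega>)) (e (Suc k) \<omega>)\<bar> \<le> Gb" .
      have "norm (g k \<omega>) = real n * \<bar>inner (gradf (y (Suc k) \<omega>)) (e (Suc k) \<omega>) + dt (Suc k) \<omega>\<bar>"
        unfolding g_def using en by (simp add: abs_mult)
      also have "\<dots> \<le> real n * (Gb + \<delta>)"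
        using s1 dt_bound[OF w, of k] abs_triangle_ineq[of "inner (gradf (y (Suc k) \<omega>)) (e (Suc k) \<omega>)" "dt (Suc k) \<omega>"]
        by (intro mult_left_mono) auto
      finally show ?thesis .
    qed
    define Bu where "Bu = B + (a k / L) * (real n * (Gb + \<delta>))"
    have um1: "u (Suc k) \<in> borel_measurable (F (Suc k))"
    proof -
      have "(\<lambda>\<omega>. u k \<omega> - (a k / L) *\<^sub>R g k \<omega>) \<in> borel_measurable (F (Suc k))"
        using lift[OF um] gm by measurable
      moreover have "u (Suc k) \<in> borel_measurable (F (Suc k)) \<longleftrightarrow> (\<lambda>\<omega>. u k \<omega> - (a k / L) *\<^sub>R g k \<omega>) \<in> borel_measurable (F (Suc k))"
        by (rule measurable_cong) (use u_form spF in auto)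
      ultimately show ?thesis by simp
    qed
    have ub1: "norm (u (Suc k) \<omega>) \<le> Bu" if w: "\<omega> \<in> space M" for \<omega>
    proof -
      have "norm (u (Suc k) \<omega>) \<le> norm (u k \<omega>) + (a k / L) * norm (g k \<omega>)"
        unfolding u_form[OF w] using apos[of k] Lpos by (simp add: norm_triangle_ineq4 order_trans[OF norm_triangle_ineq4])
      also have "\<dots> \<le> Bu" unfolding Bu_def using B[OF w] gbd[OF w] apos[of k] Lpos
        by (intro add_mono mult_left_mono) auto
      finally show ?thesis .
    qed
    have xm1: "x (Suc k) \<in> borel_measurable (F (Suc k))"
    proof -
      have "(\<lambda>\<omega>. y (Suc k) \<omega> + (real n * a k / Ak (Suc k)) *\<^sub>R (u (Suc k) \<omega> - u k \<omega>)) \<in> borel_measurable (F (Suc k))"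
        using lift[OF um] lift[OF ym] um1 by measurable
      moreover have "x (Suc k) \<in> borel_measurable (F (Suc k)) \<longleftrightarrow> (\<lambda>\<omega>. y (Suc k) \<omega> + (real n * a k / Ak (Suc k)) *\<^sub>R (u (Suc k) \<omega> - u k \<omega>)) \<in> borel_measurable (F (Suc k))"
        by (rule measurable_cong) (use x_form spF in auto)
      ultimately show ?thesis by simp
    qed
    define Bx where "Bx = B + (real n * a k / Ak (Suc k)) * (Bu + B)"
    have xb1: "norm (x (Suc k) \<omega>) \<le> Bx" if w: "\<omega> \<in> space M" for \<omega>
    proof -
      have "norm (x (Suc k) \<omega>) \<le> norm (y (Suc k) \<omega>) + (real n * a k / Ak (Suc k)) * norm (u (Suc k) \<omega> - u k \<omega>)"
        unfolding x_form[OF w] using apos[of k] ASpos[of k] by (simp add: norm_triangle_le)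
      also have "\<dots> \<le> Bx" unfolding Bx_def using yb[OF w] ub1[OF w] B[OF w] apos[of k] ASpos[of k]
        by (intro add_mono mult_left_mono order_trans[OF norm_triangle_ineq4] add_mono) auto
      finally show ?thesis .
    qed
    show ?case using um1 xm1 ub1 xb1 by (intro conjI exI[of _ "max Bu Bx"]) (auto simp: le_max_iff_disj)
  qed

  have um: "u k \<in> borel_measurable (F k)" and xm: "x k \<in> borel_measurable (F k)" for k
    using inv by blast+
  have bnd: "\<exists>B. \<forall>\<omega>\<in>space M. norm (u k \<omega>) \<le> B \<and> norm (x k \<omega>) \<le> B" for k using inv by blast
  have ym: "y (Suc k) \<in> borel_measurable (F k)" for k
  proof -
    have "(\<lambda>\<omega>. (1 / Ak (Suc k)) *\<^sub>R (a k *\<^sub>R u k \<omega> + Ak k *\<^sub>R x k \<omega>)) \<in> borel_measurable (F k)"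
      using um[of k] xm[of k] by measurable
    moreover have "y (Suc k) \<in> borel_measurable (F k) \<longleftrightarrow> (\<lambda>\<omega>. (1 / Ak (Suc k)) *\<^sub>R (a k *\<^sub>R u k \<omega> + Ak k *\<^sub>R x k \<omega>)) \<in> borel_measurable (F k)"
      by (rule measurable_cong) (use y_form spF in auto)
    ultimately show ?thesis by simp
  qed
  have yb: "norm (y (Suc k) \<omega>) \<le> B" if w: "\<omega> \<in> space M" and B: "\<And>\<omega>. \<omega> \<in> space M \<Longrightarrow> norm (u k \<omega>) \<le> B \<and> norm (x k \<omega>) \<le> B" for \<omega> k B
  proof -
    have "norm (y (Suc k) \<omega>) \<le> (1 / Ak (Suc k)) * (a k * norm (u k \<omega>) + Ak k * norm (x k \<omega>))"
      unfolding y_form[OF w] using ASpos[of k] apos[of k] Akn[of k]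
      by (simp add: norm_triangle_le divide_right_mono)
    also have "\<dots> \<le> (1 / Ak (Suc k)) * (a k * B + Ak k * B)"
      using B[OF w] ASpos[of k] apos[of k] Akn[of k]
      by (intro mult_left_mono add_mono mult_left_mono) auto
    also have "\<dots> = B" using AS[of k] ASpos[of k] by (simp add: field_simps)
    finally show ?thesis .
  qed
  define \<Phi> where "\<Phi> k \<omega> = Ak k * (f (x k \<omega>) - f xs) + L/2 * norm (u k \<omega> - xs)^2" for k \<omega>
  define \<phi> where "\<phi> k = (\<integral>\<omega>. \<Phi> k \<omega> \<partial>M)" for k
  have Phi_nn: "\<Phi> k \<omega> \<ge> 0" for k \<omega> unfolding \<Phi>_def using Akn[of k] minimum[of "x k \<omega>"] Lpos by simp
  have intg: "integrable M (\<lambda>\<omega>. h (u k \<omega>, x k \<omega>, y (Suc k) \<omega>, e (Suc k) \<omega>))"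
    if hc: "continuous_on UNIV h" for h :: "(real^'n) \<times> (real^'n) \<times> (real^'n) \<times> (real^'n) \<Rightarrow> real" and k
  proof -
    obtain B where B: "\<And>\<omega>. \<omega> \<in> space M \<Longrightarrow> norm (u k \<omega>) \<le> B \<and> norm (x k \<omega>) \<le> B" using bnd[of k] by blast
    show ?thesis
    proof (rule cont_bdd_integrable[OF prob _ _ hc])
      show "(\<lambda>\<omega>. (u k \<omega>, x k \<omega>, y (Suc k) \<omega>, e (Suc k) \<omega>)) \<in> borel_measurable M"
        using liftM[OF um[of k]] liftM[OF xm[of k]] liftM[OF ym[of k]] liftM[OF e_meas[of k]] by measurable
      fix \<omega> assume w: "\<omega> \<in> space M"
      have "norm (u k \<omega>, x k \<omega>, y (Suc k) \<omega>, e (Suc k) \<omega>) \<le> norm (u k \<omega>) + (norm (x k \<omega>) + (norm (y (Suc k) \<omega>) + norm (e (Suc k) \<omega>)))"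
        by (meson add_left_mono norm_Pair_le order_trans)
      also have "\<dots> \<le> B + (B + (B + 1))" using B[OF w] yb[OF w B] e_sphere[OF w, of k] by simp
      finally show "norm (u k \<omega>, x k \<omega>, y (Suc k) \<omega>, e (Suc k) \<omega>) \<le> B + (B + (B + 1))" .
    qed
  qed
  have int_Phi: "integrable M (\<Phi> k)" for k
  proof -
    have "integrable M (\<lambda>\<omega>. (\<lambda>p. Ak k * (f (fst (snd p)) - f xs) + L/2 * norm (fst p - xs)^2) (u k \<omega>, x k \<omega>, y (Suc k) \<omega>, e (Suc k) \<omega>))"
      by (rule intg) (intro continuous_intros continuous_on_compose2[OF contf] ; simp)
    thus ?thesis unfolding \<Phi>_def by simp
  qed

  define r where "r = sqrt (real n)"
  define l where "l = sqrt L"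
  define s2 where "s2 = sqrt (2::real)"
  have r2: "r^2 = real n" unfolding r_def using nr by simp
  have l2: "l^2 = L" unfolding l_def using Lpos by simp
  have s22: "s2^2 = 2" unfolding s2_def by simp
  have r1: "r \<ge> 1" unfolding r_def using nr by simp
  have lpos: "l > 0" unfolding l_def using Lpos by simp
  have s2pos: "s2 > 0" unfolding s2_def by simp
  define errk where "errk k = a k * \<delta> * P0 * (s2 * r / l) * (2 + sqrt (a k)) + r^4 * a k^2 * \<delta>^2 / l^2" for k
  have step: "\<phi> (Suc k) \<le> \<phi> k + errk k" if hyp: "\<phi> k \<le> P0^2" and P0pos: "P0 > 0" for k
  proof -
    let ?A = "Ak (Suc k)" and ?a = "a k"
    define G where "G \<omega> = gradf (y (Suc k) \<omega>)" for \<omega>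
    define ee where "ee \<omega> = e (Suc k) \<omega>" for \<omega>
    define w where "w \<omega> = u k \<omega> - xs" for \<omega>
    define c1 where "c1 = real n^2 * ?a^2 / L"
    define c3 where "c3 = ?a * real n * \<delta>"
    define \<beta>0 where "\<beta>0 = s2 * l * P0 * (1 + sqrt ?a) / (r^3 * ?a)"
    define \<beta>1 where "\<beta>1 = s2 * P0 / (r * l)"
    have b0pos: "\<beta>0 > 0" unfolding \<beta>0_def using s2pos lpos P0pos apos[of k] r1
      by (simp add: add_pos_nonneg)
    have b1pos: "\<beta>1 > 0" unfolding \<beta>1_def using s2pos lpos P0pos r1 by simp
    have c1n: "c1 \<ge> 0" unfolding c1_def using Lpos by simp
    have c3n: "c3 \<ge> 0" unfolding c3_def using apos[of k] d0 by simp
    have amgm: "\<bar>t\<bar> \<le> (t * t / \<beta> + \<beta>) / 2" if "\<beta> > 0" for t \<beta> :: real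
    proof -
      have "0 \<le> (\<bar>t\<bar> - \<beta>)^2" by simp
      hence "2 * \<bar>t\<bar> * \<beta> \<le> t * t + \<beta> * \<beta>" by (simp add: power2_eq_square algebra_simps)
      hence "2 * \<bar>t\<bar> * \<beta> / \<beta> \<le> (t * t + \<beta> * \<beta>) / \<beta>" using that by (intro divide_right_mono) auto
      thus ?thesis using that by (simp add: add_divide_distrib)
    qed
    define RHS where "RHS \<omega> = \<Phi> k \<omega> + ?a * inner (G \<omega>) (w \<omega>) - ?a * real n * (inner (G \<omega>) (ee \<omega>) * inner (ee \<omega>) (w \<omega>))
        + c1 * \<delta> / (2 * \<beta>0) * (inner (G \<omega>) (ee \<omega>) * inner (ee \<omega>) (G \<omega>))
        + c3 / (2 * \<beta>1) * (inner (w \<omega>) (ee \<omega>) * inner (ee \<omega>) (w \<omega>))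
        + (c1 * \<delta> * \<beta>0 / 2 + c1 * \<delta>^2 + c3 * \<beta>1 / 2)" for \<omega>
    have pw: "\<Phi> (Suc k) \<omega> \<le> RHS \<omega>" if w: "\<omega> \<in> space M" for \<omega>
    proof -
      have os: "?A * (f (x (Suc k) \<omega>) - f xs) + L/2 * norm (u (Suc k) \<omega> - xs)^2
         \<le> Ak k * (f (x k \<omega>) - f xs) + L/2 * norm (u k \<omega> - xs)^2
            + ?a * inner (G \<omega> - (real n * inner (G \<omega>) (ee \<omega>)) *\<^sub>R ee \<omega>) (w \<omega>)
            + real n^2 * ?a^2 / L * (\<bar>inner (G \<omega>) (ee \<omega>)\<bar> * \<delta> + \<delta>^2)
            + ?a * real n * \<delta> * \<bar>inner (ee \<omega>) (w \<omega>)\<bar>"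
        unfolding G_def ee_def w_def
      proof (rule one_step[OF desc tan Lpos apos[of k] Akn[of k] AS[of k] nAk[of k] dt_bound[OF w] e_sphere[OF w]])
        show "real n \<ge> 0" by simp
        show "y (Suc k) \<omega> = (1 / ?A) *\<^sub>R (?a *\<^sub>R u k \<omega> + Ak k *\<^sub>R x k \<omega>)" by (rule y_form[OF w])
        show "u (Suc k) \<omega> = u k \<omega> - (?a / L) *\<^sub>R ((real n * (inner (gradf (y (Suc k) \<omega>)) (e (Suc k) \<omega>) + dt (Suc k) \<omega>)) *\<^sub>R e (Suc k) \<omega>)"
          using u_form[OF w] unfolding g_def .
        show "x (Suc k) \<omega> = y (Suc k) \<omega> + (real n * ?a / ?A) *\<^sub>R (u (Suc k) \<omega> - u k \<omega>)" by (rule x_form[OF w])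
      qed
      have i1: "inner (G \<omega> - (real n * inner (G \<omega>) (ee \<omega>)) *\<^sub>R ee \<omega>) (w \<omega>) = inner (G \<omega>) (w \<omega>) - real n * (inner (G \<omega>) (ee \<omega>) * inner (ee \<omega>) (w \<omega>))"
        by (simp add: inner_diff_left)
      have i2: "\<bar>inner (G \<omega>) (ee \<omega>)\<bar> \<le> (inner (G \<omega>) (ee \<omega>) * inner (ee \<omega>) (G \<omega>) / \<beta>0 + \<beta>0) / 2"
        using amgm[OF b0pos, of "inner (G \<omega>) (ee \<omega>)"] by (simp add: inner_commute)
      have i3: "\<bar>inner (ee \<omega>) (w \<omega>)\<bar> \<le> (inner (w \<omega>) (ee \<omega>) * inner (ee \<omega>) (w \<omega>) / \<beta>1 + \<beta>1) / 2"
        using amgm[OF b1pos, of "inner (ee \<omega>) (w \<omega>)"] by (simp add: inner_commute)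
      have j2: "c1 * (\<bar>inner (G \<omega>) (ee \<omega>)\<bar> * \<delta>) \<le> c1 * (((inner (G \<omega>) (ee \<omega>) * inner (ee \<omega>) (G \<omega>) / \<beta>0 + \<beta>0) / 2) * \<delta>)"
        using i2 c1n d0 by (intro mult_left_mono mult_right_mono) auto
      have j3: "c3 * \<bar>inner (ee \<omega>) (w \<omega>)\<bar> \<le> c3 * ((inner (w \<omega>) (ee \<omega>) * inner (ee \<omega>) (w \<omega>) / \<beta>1 + \<beta>1) / 2)"
        using i3 c3n by (intro mult_left_mono) auto
      have "\<Phi> (Suc k) \<omega> \<le> \<Phi> k \<omega> + ?a * (inner (G \<omega>) (w \<omega>) - real n * (inner (G \<omega>) (ee \<omega>) * inner (ee \<omega>) (w \<omega>)))
            + (c1 * (\<bar>inner (G \<omega>) (ee \<omega>)\<bar> * \<delta>) + c1 * \<delta>^2) + c3 * \<bar>inner (ee \<omega>) (w \<omega>)\<bar>"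
      proof -
        have e1: "\<Phi> (Suc k) \<omega> = ?A * (f (x (Suc k) \<omega>) - f xs) + L/2 * norm (u (Suc k) \<omega> - xs)^2" unfolding \<Phi>_def ..
        have e2: "\<Phi> k \<omega> = Ak k * (f (x k \<omega>) - f xs) + L/2 * norm (u k \<omega> - xs)^2" unfolding \<Phi>_def ..
        have e3: "real n^2 * ?a^2 / L * (\<bar>inner (G \<omega>) (ee \<omega>)\<bar> * \<delta> + \<delta>^2) = c1 * (\<bar>inner (G \<omega>) (ee \<omega>)\<bar> * \<delta>) + c1 * \<delta>^2"
          unfolding c1_def by (simp add: distrib_left)
        have e4: "?a * real n * \<delta> * \<bar>inner (ee \<omega>) (w \<omega>)\<bar> = c3 * \<bar>inner (ee \<omega>) (w \<omega>)\<bar>" unfolding c3_def ..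
        show ?thesis using os unfolding e1 e2 e3 e4 i1 by linarith
      qed
      also have "\<dots> \<le> \<Phi> k \<omega> + ?a * (inner (G \<omega>) (w \<omega>) - real n * (inner (G \<omega>) (ee \<omega>) * inner (ee \<omega>) (w \<omega>)))
            + (c1 * (((inner (G \<omega>) (ee \<omega>) * inner (ee \<omega>) (G \<omega>) / \<beta>0 + \<beta>0) / 2) * \<delta>) + c1 * \<delta>^2)
            + c3 * ((inner (w \<omega>) (ee \<omega>) * inner (ee \<omega>) (w \<omega>) / \<beta>1 + \<beta>1) / 2)"
        using j2 j3 by linarith
      also have "\<dots> = RHS \<omega>" unfolding RHS_def using b0pos b1pos
        by (simp add: field_simps)
      finally show ?thesis .
    qed

    obtain B where B: "\<And>\<omega>. \<omega> \<in> space M \<Longrightarrow> norm (u k \<omega>) \<le> B \<and> norm (x k \<omega>) \<le> B" using bnd[of k] by blast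
    have Gm: "G \<in> borel_measurable (F k)"
      using measurable_compose[OF ym[of k] gmeas] unfolding G_def o_def .
    have Wm: "w \<in> borel_measurable (F k)" unfolding w_def using um[of k] by measurable
    have eem: "ee \<in> borel_measurable M" unfolding ee_def by (rule liftM[OF e_meas[of k]])
    have Gb: "norm (G \<omega>) \<le> norm (gradf 0) + L * B" if w: "\<omega> \<in> space M" for \<omega>
      unfolding G_def using gradb[of "y (Suc k) \<omega>"] yb[OF w B] Lpos
      by (meson add_left_mono mult_left_mono less_imp_le order_trans)
    have Wb: "norm (w \<omega>) \<le> B + norm xs" if w: "\<omega> \<in> space M" for \<omega>
      unfolding w_def using B[OF w] norm_triangle_ineq4[of "u k \<omega>" xs] by simp
    have eb: "norm (ee \<omega>) \<le> 1" if w: "\<omega> \<in> space M" for \<omega> unfolding ee_def using e_sphere[OF w] by simp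
    have cov': "\<And>i j. AE \<omega> in M. real_cond_exp M (F k) (\<lambda>\<omega>. ee \<omega> $ i * ee \<omega> $ j) \<omega> = (if i = j then 1 / real n else 0)"
      unfolding ee_def by (rule e_cov)
    have cov1: "(\<integral>\<omega>. inner (G \<omega>) (ee \<omega>) * inner (ee \<omega>) (w \<omega>) \<partial>M) = 1 / real n * (\<integral>\<omega>. inner (G \<omega>) (w \<omega>) \<partial>M)"
      by (rule cov_lemma[OF prob sub eem Gm Wm eb Gb Wb cov'])
    have cov2: "(\<integral>\<omega>. inner (G \<omega>) (ee \<omega>) * inner (ee \<omega>) (G \<omega>) \<partial>M) = 1 / real n * (\<integral>\<omega>. inner (G \<omega>) (G \<omega>) \<partial>M)"
      by (rule cov_lemma[OF prob sub eem Gm Gm eb Gb Gb cov'])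
    have cov3: "(\<integral>\<omega>. inner (w \<omega>) (ee \<omega>) * inner (ee \<omega>) (w \<omega>) \<partial>M) = 1 / real n * (\<integral>\<omega>. inner (w \<omega>) (w \<omega>) \<partial>M)"
      by (rule cov_lemma[OF prob sub eem Wm Wm eb Wb Wb cov'])
    have I1: "integrable M (\<lambda>\<omega>. inner (G \<omega>) (w \<omega>))"
    proof -
      have "integrable M (\<lambda>\<omega>. (\<lambda>p. inner (gradf (fst (snd (snd p)))) (fst p - xs)) (u k \<omega>, x k \<omega>, y (Suc k) \<omega>, e (Suc k) \<omega>))"
        by (rule intg) (intro continuous_intros continuous_on_compose2[OF contg] ; simp)
      thus ?thesis unfolding G_def w_def by simp
    qed
    have I2: "integrable M (\<lambda>\<omega>. inner (G \<omega>) (ee \<omega>) * inner (ee \<omega>) (w \<omega>))"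
    proof -
      have "integrable M (\<lambda>\<omega>. (\<lambda>p. inner (gradf (fst (snd (snd p)))) (snd (snd (snd p))) * inner (snd (snd (snd p))) (fst p - xs)) (u k \<omega>, x k \<omega>, y (Suc k) \<omega>, e (Suc k) \<omega>))"
        by (rule intg) (intro continuous_intros continuous_on_compose2[OF contg] ; simp)
      thus ?thesis unfolding G_def w_def ee_def by simp
    qed
    have I3: "integrable M (\<lambda>\<omega>. inner (G \<omega>) (ee \<omega>) * inner (ee \<omega>) (G \<omega>))"
    proof -
      have "integrable M (\<lambda>\<omega>. (\<lambda>p. inner (gradf (fst (snd (snd p)))) (snd (snd (snd p))) * inner (snd (snd (snd p))) (gradf (fst (snd (snd p))))) (u k \<omega>, x k \<omega>, y (Suc k) \<omega>, e (Suc k) \<omega>))"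
        by (rule intg) (intro continuous_intros continuous_on_compose2[OF contg] ; simp)
      thus ?thesis unfolding G_def ee_def by simp
    qed
    have I4: "integrable M (\<lambda>\<omega>. inner (w \<omega>) (ee \<omega>) * inner (ee \<omega>) (w \<omega>))"
    proof -
      have "integrable M (\<lambda>\<omega>. (\<lambda>p. inner (fst p - xs) (snd (snd (snd p))) * inner (snd (snd (snd p))) (fst p - xs)) (u k \<omega>, x k \<omega>, y (Suc k) \<omega>, e (Suc k) \<omega>))"
        by (rule intg) (intro continuous_intros ; simp)
      thus ?thesis unfolding w_def ee_def by simp
    qed
    have I5: "integrable M (\<lambda>\<omega>. inner (G \<omega>) (G \<omega>))"
    proof -
      have "integrable M (\<lambda>\<omega>. (\<lambda>p. inner (gradf (fst (snd (snd p)))) (gradf (fst (snd (snd p))))) (u k \<omega>, x k \<omega>, y (Suc k) \<omega>, e (Suc k) \<omega>))"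
        by (rule intg) (intro continuous_intros continuous_on_compose2[OF contg] ; simp)
      thus ?thesis unfolding G_def by simp
    qed
    have I6: "integrable M (\<lambda>\<omega>. inner (w \<omega>) (w \<omega>))"
    proof -
      have "integrable M (\<lambda>\<omega>. (\<lambda>p. inner (fst p - xs) (fst p - xs)) (u k \<omega>, x k \<omega>, y (Suc k) \<omega>, e (Suc k) \<omega>))"
        by (rule intg) (intro continuous_intros ; simp)
      thus ?thesis unfolding w_def by simp
    qed
    have intR: "integrable M RHS" unfolding RHS_def using int_Phi[of k] I1 I2 I3 I4 by simp
    have intRHS: "(\<integral>\<omega>. RHS \<omega> \<partial>M) = \<phi> k + ?a * (\<integral>\<omega>. inner (G \<omega>) (w \<omega>) \<partial>M)
        - ?a * real n * (\<integral>\<omega>. inner (G \<omega>) (ee \<omega>) * inner (ee \<omega>) (w \<omega>) \<partial>M)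
        + c1 * \<delta> / (2 * \<beta>0) * (\<integral>\<omega>. inner (G \<omega>) (ee \<omega>) * inner (ee \<omega>) (G \<omega>) \<partial>M)
        + c3 / (2 * \<beta>1) * (\<integral>\<omega>. inner (w \<omega>) (ee \<omega>) * inner (ee \<omega>) (w \<omega>) \<partial>M)
        + (c1 * \<delta> * \<beta>0 / 2 + c1 * \<delta>^2 + c3 * \<beta>1 / 2)"
      unfolding RHS_def \<phi>_def using int_Phi[of k] I1 I2 I3 I4 by (simp add: P.prob_space)
    have le1: "\<phi> (Suc k) \<le> (\<integral>\<omega>. RHS \<omega> \<partial>M)"
      unfolding \<phi>_def by (rule integral_mono[OF int_Phi intR pw])
    have GG: "(\<integral>\<omega>. inner (G \<omega>) (G \<omega>) \<partial>M) \<le> 2 * L * (1 + ?a) / ?A * \<phi> k"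
    proof -
      have "(\<integral>\<omega>. inner (G \<omega>) (G \<omega>) \<partial>M) \<le> (\<integral>\<omega>. 2 * L * (1 + ?a) / ?A * \<Phi> k \<omega> \<partial>M)"
      proof (rule integral_mono[OF I5])
        show "integrable M (\<lambda>\<omega>. 2 * L * (1 + ?a) / ?A * \<Phi> k \<omega>)" using int_Phi[of k] by simp
        fix \<omega> assume w: "\<omega> \<in> space M"
        have cvx: "f (y (Suc k) \<omega>) \<le> (?a / ?A) * f (u k \<omega>) + (Ak k / ?A) * f (x k \<omega>)"
        proof -
          have t01: "0 \<le> Ak k / ?A" "Ak k / ?A \<le> 1" using Akn[of k] ASpos[of k] AS[of k] apos[of k] by auto
          have yy: "y (Suc k) \<omega> = (1 - Ak k / ?A) *\<^sub>R u k \<omega> + (Ak k / ?A) *\<^sub>R x k \<omega>"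
            unfolding y_form[OF w] using ASpos[of k] AS[of k] by (simp add: field_simps scaleR_add_right)
          have "1 - Ak k / ?A = ?a / ?A" using ASpos[of k] AS[of k] by (simp add: field_simps)
          thus ?thesis using convex_onD[OF convex t01, of "u k \<omega>" "x k \<omega>"] yy by simp
        qed
        have "?A * (f (y (Suc k) \<omega>) - f xs) \<le> ?a * (f (u k \<omega>) - f xs) + Ak k * (f (x k \<omega>) - f xs)"
        proof -
          have "?A * f (y (Suc k) \<omega>) \<le> ?A * ((?a / ?A) * f (u k \<omega>) + (Ak k / ?A) * f (x k \<omega>))"
            using cvx ASpos[of k] by (intro mult_left_mono) auto
          also have "\<dots> = ?a * f (u k \<omega>) + Ak k * f (x k \<omega>)" using ASpos[of k] by (simp add: field_simps)
          finally show ?thesis using AS[of k] by (simp add: algebra_simps)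
        qed
        also have "\<dots> \<le> ?a * (L/2 * norm (u k \<omega> - xs)^2) + Ak k * (f (x k \<omega>) - f xs)"
          using fu[of "u k \<omega>"] apos[of k] by (intro add_right_mono mult_left_mono) auto
        also have "\<dots> \<le> (1 + ?a) * \<Phi> k \<omega>"
        proof -
          define X where "X = Ak k * (f (x k \<omega>) - f xs)"
          define Y where "Y = L/2 * norm (u k \<omega> - xs)^2"
          have X0: "0 \<le> X" unfolding X_def using Akn[of k] minimum[of "x k \<omega>"] by simp
          have Y0: "0 \<le> Y" unfolding Y_def using Lpos by simp
          have aX: "0 \<le> ?a * X" using X0 apos[of k] by simp
          have "(1 + ?a) * (X + Y) = X + Y + ?a * X + ?a * Y" by (simp add: algebra_simps)
          hence "?a * Y + X \<le> (1 + ?a) * (X + Y)" using aX Y0 by linarith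
          thus ?thesis unfolding \<Phi>_def X_def[symmetric] Y_def[symmetric] .
        qed
        finally have fy: "?A * (f (y (Suc k) \<omega>) - f xs) \<le> (1 + ?a) * \<Phi> k \<omega>" .
        have "inner (G \<omega>) (G \<omega>) \<le> 2 * L * (f (y (Suc k) \<omega>) - f xs)"
          using gb[of "y (Suc k) \<omega>"] unfolding G_def by (simp add: power2_norm_eq_inner)
        also have "\<dots> \<le> 2 * L * ((1 + ?a) * \<Phi> k \<omega> / ?A)"
          using fy ASpos[of k] Lpos by (intro mult_left_mono) (auto simp: field_simps)
        finally show "inner (G \<omega>) (G \<omega>) \<le> 2 * L * (1 + ?a) / ?A * \<Phi> k \<omega>" by simp
      qed
      also have "\<dots> = 2 * L * (1 + ?a) / ?A * \<phi> k" unfolding \<phi>_def by simp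
      finally show ?thesis .
    qed
    have WW: "(\<integral>\<omega>. inner (w \<omega>) (w \<omega>) \<partial>M) \<le> 2 / L * \<phi> k"
    proof -
      have "(\<integral>\<omega>. inner (w \<omega>) (w \<omega>) \<partial>M) \<le> (\<integral>\<omega>. 2 / L * \<Phi> k \<omega> \<partial>M)"
      proof (rule integral_mono[OF I6])
        show "integrable M (\<lambda>\<omega>. 2 / L * \<Phi> k \<omega>)" using int_Phi[of k] by simp
        fix \<omega> assume w: "\<omega> \<in> space M"
        have "0 \<le> Ak k * (f (x k \<omega>) - f xs)" using Akn[of k] minimum[of "x k \<omega>"] by simp
        hence "L/2 * inner (w \<omega>) (w \<omega>) \<le> \<Phi> k \<omega>" unfolding \<Phi>_def w_def by (simp add: power2_norm_eq_inner)
        thus "inner (w \<omega>) (w \<omega>) \<le> 2 / L * \<Phi> k \<omega>" using Lpos by (simp add: field_simps)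
      qed
      also have "\<dots> = 2 / L * \<phi> k" unfolding \<phi>_def by simp
      finally show ?thesis .
    qed

    have nrpos: "real n > 0" using nr by simp
    have GGb: "1 / real n * (\<integral>\<omega>. inner (G \<omega>) (G \<omega>) \<partial>M) \<le> \<beta>0^2"
    proof -
      have coef: "0 \<le> 2 * L * (1 + ?a) / ?A" using Lpos apos[of k] ASpos[of k] by simp
      have "1 / real n * (\<integral>\<omega>. inner (G \<omega>) (G \<omega>) \<partial>M) \<le> 1 / real n * (2 * L * (1 + ?a) / ?A * P0^2)"
        using GG mult_left_mono[OF hyp coef] nrpos by (intro mult_left_mono) auto
      also have "\<dots> = 2 * L * P0^2 * (1 + ?a) * (1 / (real n * ?A))" by (simp add: field_simps)
      also have "\<dots> \<le> 2 * L * P0^2 * (1 + sqrt ?a)^2 * (1 / (real n * (real n^2 * ?a^2)))"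
      proof (rule mult_mono)
        have "1 + ?a \<le> (1 + sqrt ?a)^2" using apos[of k] by (simp add: power2_eq_square algebra_simps)
        thus "2 * L * P0^2 * (1 + ?a) \<le> 2 * L * P0^2 * (1 + sqrt ?a)^2" using Lpos by (intro mult_left_mono) auto
        show "1 / (real n * ?A) \<le> 1 / (real n * (real n^2 * ?a^2))"
          using nAk[of k] nrpos apos[of k] ASpos[of k] by (intro divide_left_mono mult_left_mono mult_pos_pos) auto
        show "0 \<le> 2 * L * P0^2 * (1 + sqrt ?a)^2" using Lpos by simp
        show "0 \<le> 1 / (real n * ?A)" using nrpos ASpos[of k] by simp
      qed
      also have "\<dots> = \<beta>0^2"
      proof -
        have r6: "(r^3)^2 = real n * real n^2"
          using r2 by (metis power_mult power_commutes mult.commute numeral_times_numeral power_add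
              numeral_One numeral_plus_one semiring_norm(2) semiring_norm(5) power3_eq_cube power2_eq_square)
        have "\<beta>0^2 = s2^2 * l^2 * P0^2 * (1 + sqrt ?a)^2 / ((r^3)^2 * ?a^2)"
          unfolding \<beta>0_def by (simp add: power_divide power_mult_distrib)
        also have "\<dots> = 2 * L * P0^2 * (1 + sqrt ?a)^2 / (real n * real n^2 * ?a^2)"
          unfolding s22 l2 r6 ..
        finally show ?thesis by (simp add: mult.assoc)
      qed
      finally show ?thesis .
    qed
    have WWb: "1 / real n * (\<integral>\<omega>. inner (w \<omega>) (w \<omega>) \<partial>M) \<le> \<beta>1^2"
    proof -
      have "1 / real n * (\<integral>\<omega>. inner (w \<omega>) (w \<omega>) \<partial>M) \<le> 1 / real n * (2 / L * P0^2)"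
        using WW mult_left_mono[OF hyp, of "2 / L"] Lpos nrpos by (intro mult_left_mono) auto
      also have "\<dots> = \<beta>1^2" unfolding \<beta>1_def using r1 lpos
        by (simp add: power_divide power_mult_distrib s22 l2 r2[symmetric])
      finally show ?thesis .
    qed
    define J1 where "J1 = (\<integral>\<omega>. inner (G \<omega>) (w \<omega>) \<partial>M)"
    define J3 where "J3 = 1 / real n * (\<integral>\<omega>. inner (G \<omega>) (G \<omega>) \<partial>M)"
    define J4 where "J4 = 1 / real n * (\<integral>\<omega>. inner (w \<omega>) (w \<omega>) \<partial>M)"
    have k3: "c1 * \<delta> / (2 * \<beta>0) * J3 \<le> c1 * \<delta> / (2 * \<beta>0) * \<beta>0^2"
      unfolding J3_def using GGb c1n d0 b0pos by (intro mult_left_mono) auto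
    have k4: "c3 / (2 * \<beta>1) * J4 \<le> c3 / (2 * \<beta>1) * \<beta>1^2"
      unfolding J4_def using WWb c3n b1pos by (intro mult_left_mono) auto
    have k3e: "c1 * \<delta> / (2 * \<beta>0) * \<beta>0^2 = c1 * \<delta> * \<beta>0 / 2" using b0pos by (simp add: power2_eq_square)
    have k4e: "c3 / (2 * \<beta>1) * \<beta>1^2 = c3 * \<beta>1 / 2" using b1pos by (simp add: power2_eq_square)
    have k1e: "?a * real n * (1 / real n * J1) = ?a * J1" using nrpos by simp
    have "\<phi> (Suc k) \<le> \<phi> k + ?a * J1 - ?a * real n * (1 / real n * J1) + c1 * \<delta> / (2 * \<beta>0) * J3 + c3 / (2 * \<beta>1) * J4
        + (c1 * \<delta> * \<beta>0 / 2 + c1 * \<delta>^2 + c3 * \<beta>1 / 2)"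
      using le1 unfolding intRHS cov1 cov2 cov3 J1_def J3_def J4_def .
    hence "\<phi> (Suc k) \<le> \<phi> k + (c1 * \<delta> * \<beta>0 + c1 * \<delta>^2 + c3 * \<beta>1)"
      using k3 k4 k3e k4e k1e by linarith
    also have "c1 * \<delta> * \<beta>0 + c1 * \<delta>^2 + c3 * \<beta>1 = errk k"
      unfolding errk_def c1_def c3_def \<beta>0_def \<beta>1_def using apos[of k] r1 lpos
      by (simp add: l2[symmetric] r2[symmetric] power2_eq_square power3_eq_cube power4_eq_xxxx field_simps)
    finally show ?thesis .
  qed

  define q where "q = sqrt \<epsilon>"
  have qpos: "q > 0" unfolding q_def using eps_pos by simp
  have q2: "q^2 = \<epsilon>" unfolding q_def using eps_pos by simp
  define T where "T = sqrt 2 * real n * P0 / sqrt \<epsilon>"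
  have Tr: "T = r^2 * (s2 * P0 / q)" unfolding T_def r2 s2_def q_def by simp
  have inside0: "0 \<le> normL_sq L (x0 - xs) + 2 * (1 - 1 / real n) * (f x0 - f xs)"
  proof -
    have "0 \<le> 1 - 1 / real n" using nr by simp
    moreover have "0 \<le> f x0 - f xs" using minimum[of x0] by simp
    ultimately have "0 \<le> 2 * (1 - 1 / real n) * (f x0 - f xs)" by simp
    moreover have "0 \<le> normL_sq L (x0 - xs)" unfolding normL_eq using Lpos by simp
    ultimately show ?thesis by linarith
  qed
  have P0n: "P0 \<ge> 0" unfolding P0_def using inside0 by simp
  have Tgt: "T > 2 * real n - 1" using N_ge unfolding N_def T_def by simp
  have T1: "T \<ge> real n" using Tgt nr by simp
  have P0pos: "P0 > 0"
  proof (rule ccontr)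
    assume "\<not> P0 > 0" hence "P0 = 0" using P0n by simp
    hence "T = 0" unfolding T_def by simp
    thus False using T1 nr by simp
  qed
  have Tpos: "T > 0" using T1 nr by simp
  have qP: "q \<le> s2 * P0"
  proof -
    have "real n \<le> real n * (s2 * P0 / q)" using T1 unfolding Tr r2 by (simp add: mult.commute)
    hence "real n * 1 \<le> real n * (s2 * P0 / q)" by simp
    hence "1 \<le> s2 * P0 / q" using nr by (subst (asm) mult_le_cancel_left_pos) auto
    thus ?thesis using qpos by (simp add: field_simps)
  qed
  have NT: "real_of_int N \<le> T"
  proof -
    have "real_of_int N < T + 1 - 2 * real n + 1" unfolding N_def T_def
      using ceiling_correct[of "sqrt 2 * real n * P0 / sqrt \<epsilon> + 1 - 2 * real n"] by linarith
    thus ?thesis using nr by simp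
  qed
  have KT: "real K \<le> T" using K_le NT by (metis of_int_le_iff of_int_of_nat_eq order_trans)
  have dl: "\<delta> \<le> q^3 * l / (96 * r * P0^2)"
  proof -
    have "\<epsilon> powr (3/2) = \<epsilon> powr (1 + 1/2)" by simp
    also have "\<dots> = \<epsilon> powr 1 * \<epsilon> powr (1/2)" by (rule powr_add)
    also have "\<dots> = \<epsilon> * sqrt \<epsilon>" using eps_pos by (simp add: powr_half_sqrt)
    also have "\<dots> = q^3" unfolding q_def using eps_pos by (simp add: power3_eq_cube)
    finally have "\<epsilon> powr (3/2) = q^3" .
    thus ?thesis using delta_le unfolding l_def r_def by simp
  qed
  have errb: "errk k \<le> P0^2 / (2 * T)" if kN: "int (Suc k) \<le> N" for k
  proof -
    have ak: "a k \<le> (s2 * P0 / q) / r^2"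
    proof -
      have "real (Suc k) \<le> T" using kN NT by (metis of_int_le_iff of_int_of_nat_eq order_trans)
      have "real_of_int (int (Suc k)) < T + 1 - 2 * real n + 1"
        using kN ceiling_correct[of "T + 1 - 2 * real n"] unfolding N_def T_def by linarith
      hence "real k + 2 * real n \<le> 2 * T" using T1 nr by simp
      hence "(real k + 2 * real n) / (2 * real n^2) \<le> 2 * T / (2 * real n^2)"
        using nr by (intro divide_right_mono) auto
      hence "a k \<le> 2 * T / (2 * real n^2)" unfolding a_def by simp
      also have "\<dots> = (s2 * P0 / q) / r^2" unfolding Tr r2 using nr by (simp add: power2_eq_square)
      finally show ?thesis .
    qed
    have "T * errk k \<le> P0^2 / 2" unfolding Tr errk_def
      by (rule numeric_core[OF r1 lpos qpos P0pos s2pos s22 d0 less_imp_le[OF apos] qP dl ak])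
    thus ?thesis using Tpos by (simp add: field_simps)
  qed
  have phi0: "\<phi> 0 = P0^2 / 2"
  proof -
    have "\<phi> 0 = (\<integral>\<omega>. (1 - 1 / real n) * (f x0 - f xs) + L/2 * norm (x0 - xs)^2 \<partial>M)"
      unfolding \<phi>_def by (rule Bochner_Integration.integral_cong[OF refl]) (auto simp: \<Phi>_def init Ak_def mtm_A_def)
    also have "\<dots> = (1 - 1 / real n) * (f x0 - f xs) + L/2 * norm (x0 - xs)^2" by (simp add: P.prob_space)
    also have "\<dots> = P0^2 / 2"
    proof -
      from inside0 have "P0^2 = L * norm (x0 - xs)^2 + 2 * (1 - 1 / real n) * (f x0 - f xs)"
        unfolding P0_def normL_eq by simp
      thus ?thesis by simp
    qed
    finally show ?thesis .
  qed
  have ind: "k \<le> K \<Longrightarrow> \<phi> k \<le> P0^2 / 2 + real k * (P0^2 / (2 * T))" for k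
  proof (induction k)
    case 0 thus ?case using phi0 by simp
  next
    case (Suc k)
    have IH: "\<phi> k \<le> P0^2 / 2 + real k * (P0^2 / (2 * T))" using Suc by simp
    have "real k * (P0^2 / (2 * T)) \<le> T * (P0^2 / (2 * T))"
      using KT Suc.prems Tpos by (intro mult_right_mono) auto
    also have "\<dots> = P0^2 / 2" using Tpos by simp
    finally have "real k * (P0^2 / (2 * T)) \<le> P0^2 / 2" .
    hence "\<phi> k \<le> P0^2" using IH by linarith
    hence "\<phi> (Suc k) \<le> \<phi> k + errk k" by (rule step[OF _ P0pos])
    moreover have "errk k \<le> P0^2 / (2 * T)" using Suc.prems K_le by (intro errb) simp
    moreover have "real (Suc k) * (P0^2 / (2 * T)) = real k * (P0^2 / (2 * T)) + P0^2 / (2 * T)"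
      by (simp add: distrib_right add_divide_distrib)
    ultimately show ?case using IH by linarith
  qed
  have phiK: "\<phi> K \<le> P0^2"
  proof -
    have "real K * (P0^2 / (2 * T)) \<le> T * (P0^2 / (2 * T))"
      using KT Tpos by (intro mult_right_mono) auto
    also have "\<dots> = P0^2 / 2" using Tpos by simp
    finally have "real K * (P0^2 / (2 * T)) \<le> P0^2 / 2" .
    thus ?thesis using ind[of K] by linarith
  qed
  have intU: "integrable M (\<lambda>\<omega>. L/2 * norm (u K \<omega> - xs)^2)"
  proof -
    have "integrable M (\<lambda>\<omega>. (\<lambda>p. L/2 * norm (fst p - xs)^2) (u K \<omega>, x K \<omega>, y (Suc K) \<omega>, e (Suc K) \<omega>))"
      by (rule intg) (intro continuous_intros)
    thus ?thesis by simp
  qed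
  have "(1/2) * (\<integral>\<omega>. normL_sq L (u K \<omega> - xs) \<partial>M) = (\<integral>\<omega>. L/2 * norm (u K \<omega> - xs)^2 \<partial>M)"
    unfolding normL_eq by simp
  also have "\<dots> \<le> \<phi> K" unfolding \<phi>_def
  proof (rule integral_mono[OF intU int_Phi])
    fix \<omega> show "L/2 * norm (u K \<omega> - xs)^2 \<le> \<Phi> K \<omega>"
      unfolding \<Phi>_def using Akn[of K] minimum[of "x K \<omega>"] by simp
  qed
  also have "\<dots> \<le> P0^2" by (rule phiK)
  finally show ?thesis .
qed

end
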